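(* For every $n\ge 1$, $|\mathrm{Sort}_n(132,321)|$ equals the $n$-th term of OEIS sequence A102407, i.e. the number of Dyck paths of semilength $n$ that do not contain $dudu$ as a factor (four consecutive steps down, up, down, up).
   Context: A permutation $x$ contains a pattern $p$ if it has a subsequence order-isomorphic to $p$; otherwise it avoids $p$. For a set $T$ of patterns, the map $s_T$ is defined as follows: the entries of the input permutation $x=x_1\cdots x_n$ are read from left to right, with an initially empty stack. At each step, if the input is nonempty and pushing the next input entry onto the stack produces a stack whose contents, read from top to bottom, avoid every pattern in $T$, that entry is pushed; otherwise the top entry of the stack is popped and appended to the output. When the input is exhausted, the remaining stack entries are popped one at a time to the output. $s_T(x)$ is the output word. Write $s_{\sigma,\tau}=s_{\{\sigma,\tau\}}$ and $s=s_{\{21\}}$ (West's stack-sorting map, whose stack is increasing from top to bottom). $\mathrm{Sort}_n(\sigma,\tau)$ is the set of $x\in S_n$ such that $s(s_{\sigma,\tau}(x))=12\cdots n$. A Dyck path of semilength $n$ is a lattice path from $(0,0)$ to $(2n,0)$ with steps $u=(1,1)$ and $d=(1,-1)$ never going below the $x$-axis. *)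

theory Defs
  imports Main "HOL-Library.Sublist" "HOL-Combinatorics.Multiset_Permutations"
begin

definition order_iso :: "nat list \<Rightarrow> nat list \<Rightarrow> bool" where
  "order_iso w p \<longleftrightarrow> length w = length p \<and>
     (\<forall>i<length w. \<forall>j<length w. (w ! i < w ! j \<longleftrightarrow> p ! i < p ! j))"

definition contains :: "nat list \<Rightarrow> nat list \<Rightarrow> bool" where
  "contains x p \<longleftrightarrow> (\<exists>w. subseq w x \<and> order_iso w p)"

definition avoids_all :: "nat list set \<Rightarrow> nat list \<Rightarrow> bool" where
  "avoids_all T x \<longleftrightarrow> (\<forall>p\<in>T. \<not> contains x p)"

text \<open>Arguments: pattern set, remaining input,
  stack contents read from top (head) to bottom.
  If a push is forbidden but the stack is empty (never happens for patterns of
  length at least 2), the entry is pushed anyway, to keep the function total.\<close>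
function stack_run :: "nat list set \<Rightarrow> nat list \<Rightarrow> nat list \<Rightarrow> nat list" where
  "stack_run T [] [] = []"
| "stack_run T [] (y # ys) = y # stack_run T [] ys"
| "stack_run T (x # xs) stk =
     (if avoids_all T (x # stk) then stack_run T xs (x # stk)
      else (case stk of [] \<Rightarrow> stack_run T xs [x]
                      | y # ys \<Rightarrow> y # stack_run T (x # xs) ys))"
  by pat_completeness auto
termination
  by (relation "measure (\<lambda>(T, inp, stk). 2 * length inp + length stk)") auto

definition s_map :: "nat list set \<Rightarrow> nat list \<Rightarrow> nat list" where
  "s_map T x = stack_run T x []"

definition west_s :: "nat list \<Rightarrow> nat list" where
  "west_s x = s_map {[2,1]} x"

definition Sort_set :: "nat \<Rightarrow> nat list \<Rightarrow> nat list \<Rightarrow> nat list set" where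
  "Sort_set n \<sigma> \<tau> = {x \<in> permutations_of_set {1..n}. west_s (s_map {\<sigma>, \<tau>} x) = [1..<n+1]}"

text \<open>Dyck paths: True = up step u, False = down step d.\<close>
definition height :: "bool list \<Rightarrow> int" where
  "height w = (\<Sum>b\<leftarrow>w. if b then 1 else -1)"

definition dyck_path :: "nat \<Rightarrow> bool list \<Rightarrow> bool" where
  "dyck_path n w \<longleftrightarrow> length w = 2 * n \<and> height w = 0 \<and>
     (\<forall>k\<le>length w. height (take k w) \<ge> 0)"

definition A102407 :: "nat \<Rightarrow> nat" where
  "A102407 n = card {w. dyck_path n w \<and> \<not> sublist [False, True, False, True] w}"

end

theory Submission
  imports Defs
begin

lemma order_iso3:
  "order_iso [a,b,c] [p,q,r] \<longleftrightarrow> ((a<b) = (p<q)) \<and> ((a<c) = (p<r)) \<and> ((b<c) = (q<r))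
     \<and> ((b<a) = (q<p)) \<and> ((c<a) = (r<p)) \<and> ((c<b) = (r<q))"
  unfolding order_iso_def by (auto simp: less_Suc_eq numeral_3_eq_3)

lemma order_iso2:
  "order_iso [a,b] [p,q] \<longleftrightarrow> ((a<b) = (p<q)) \<and> ((b<a) = (q<p))"
  unfolding order_iso_def by (auto simp: less_Suc_eq numeral_2_eq_2)

lemma len3: "length w = 3 \<Longrightarrow> \<exists>a b c. w = [a,b,c]"
  by (cases w; simp; rename_tac l; case_tac l; simp; rename_tac l2; case_tac l2; simp)

lemma len2: "length w = 2 \<Longrightarrow> \<exists>a b. w = [a,b]"
  by (cases w; simp; rename_tac l; case_tac l; simp)

lemma contains_132: "contains xs [1,3,2] \<longleftrightarrow> (\<exists>a b c. subseq [a,b,c] xs \<and> a < c \<and> c < b)"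
proof
  assume "contains xs [1,3,2]"
  then obtain w where w: "subseq w xs" "order_iso w [1,3,2]" unfolding contains_def by blast
  then have "length w = 3" unfolding order_iso_def by simp
  then obtain a b c where "w = [a,b,c]" using len3 by blast
  with w show "\<exists>a b c. subseq [a,b,c] xs \<and> a < c \<and> c < b" by (auto simp: order_iso3)
next
  assume "\<exists>a b c. subseq [a,b,c] xs \<and> a < c \<and> c < b"
  then obtain a b c where "subseq [a,b,c] xs" "a < c" "c < b" by blast
  then show "contains xs [1,3,2]" unfolding contains_def
    by (intro exI[of _ "[a,b,c]"]) (auto simp: order_iso3)
qed

lemma contains_321: "contains xs [3,2,1] \<longleftrightarrow> (\<exists>a b c. subseq [a,b,c] xs \<and> c < b \<and> b < a)"
proof
  assume "contains xs [3,2,1]"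
  then obtain w where w: "subseq w xs" "order_iso w [3,2,1]" unfolding contains_def by blast
  then have "length w = 3" unfolding order_iso_def by simp
  then obtain a b c where "w = [a,b,c]" using len3 by blast
  with w show "\<exists>a b c. subseq [a,b,c] xs \<and> c < b \<and> b < a" by (auto simp: order_iso3)
next
  assume "\<exists>a b c. subseq [a,b,c] xs \<and> c < b \<and> b < a"
  then obtain a b c where "subseq [a,b,c] xs" "c < b" "b < a" by blast
  then show "contains xs [3,2,1]" unfolding contains_def
    by (intro exI[of _ "[a,b,c]"]) (auto simp: order_iso3)
qed

lemma contains_21: "contains xs [2,1] \<longleftrightarrow> (\<exists>a b. subseq [a,b] xs \<and> b < a)"
proof
  assume "contains xs [2,1]"
  then obtain w where w: "subseq w xs" "order_iso w [2,1]" unfolding contains_def by blast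
  then have "length w = 2" unfolding order_iso_def by simp
  then obtain a b where "w = [a,b]" using len2 by blast
  with w show "\<exists>a b. subseq [a,b] xs \<and> b < a" by (auto simp: order_iso2)
next
  assume "\<exists>a b. subseq [a,b] xs \<and> b < a"
  then obtain a b where "subseq [a,b] xs" "b < a" by blast
  then show "contains xs [2,1]" unfolding contains_def
    by (intro exI[of _ "[a,b]"]) (auto simp: order_iso2)
qed

lemma contains_231I: "subseq [a,b,c] xs \<Longrightarrow> c < a \<Longrightarrow> a < b \<Longrightarrow> contains xs [2,3,1]"
  unfolding contains_def by (intro exI[of _ "[a,b,c]"]) (auto simp: order_iso3)

lemma subseq_Cons_right_iff:
  "subseq xs (y # ys) \<longleftrightarrow> subseq xs ys \<or> (\<exists>xs'. xs = y # xs' \<and> subseq xs' ys)"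
  by (cases xs) (auto simp: subseq_Cons2_iff dest: subseq_Cons')

declare stack_run.simps(3)[simp del]

lemma sr_push: "avoids_all T (x#stk) \<Longrightarrow> stack_run T (x#xs) stk = stack_run T xs (x#stk)"
  by (simp add: stack_run.simps(3))
lemma sr_pop: "\<not> avoids_all T (x#y#ys) \<Longrightarrow> stack_run T (x#xs) (y#ys) = y # stack_run T (x#xs) ys"
  by (simp add: stack_run.simps(3))
lemma sr_force: "\<not> avoids_all T [x] \<Longrightarrow> stack_run T (x#xs) [] = stack_run T xs [x]"
  by (simp add: stack_run.simps(3))

lemma stack_run_Nil: "stack_run T [] stk = stk"
  by (induction stk) auto

lemma stack_run_mset: "mset (stack_run T inp stk) = mset inp + mset stk"
proof (induction T inp stk rule: stack_run.induct)
  case (3 T x xs stk)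
  then show ?case by (cases "avoids_all T (x#stk)"; cases stk) (auto simp: sr_push sr_pop sr_force)
qed auto

lemma stack_run_set: "set (stack_run T inp stk) = set inp \<union> set stk"
  by (metis stack_run_mset set_mset_mset set_mset_union)

lemma stack_run_subseq: "subseq stk (stack_run T inp stk)"
proof (induction T inp stk rule: stack_run.induct)
  case (3 T x xs stk)
  then show ?case by (cases "avoids_all T (x#stk)"; cases stk) (auto simp: sr_push sr_pop sr_force dest: subseq_Cons')
qed auto

lemma subseq2_sorted: "subseq [x,y] W \<Longrightarrow> sorted_wrt R W \<Longrightarrow> R x y"
proof (induction W)
  case Nil then show ?case by simp
next
  case (Cons w W)
  then show ?case by (auto simp: subseq_Cons_right_iff subseq_singleton_left)
qed

abbreviation GG :: "nat list set" where "GG \<equiv> {[1,3,2],[3,2,1]}"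

lemma avoids_GG: "avoids_all GG xs \<longleftrightarrow>
   \<not> (\<exists>a b c. subseq [a,b,c] xs \<and> a < c \<and> c < b) \<and> \<not> (\<exists>a b c. subseq [a,b,c] xs \<and> c < b \<and> b < a)"
  unfolding avoids_all_def contains_132[symmetric] contains_321[symmetric] by simp

lemma subseq3_Cons: "subseq [x,y,z] (b # L) \<longleftrightarrow> subseq [x,y,z] L \<or> (x = b \<and> subseq [y,z] L)"
  by (subst subseq_Cons_right_iff) blast

lemma subseq2_Cons: "subseq [y,z] (b # L) \<longleftrightarrow> subseq [y,z] L \<or> (y = b \<and> z \<in> set L)"
  by (subst subseq_Cons_right_iff) (auto simp only: subseq_singleton_left list.inject)

lemma subseq3_tail: "subseq [x,y,z] L \<Longrightarrow> subseq [y,z] L"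
  by (rule subseq_Cons')

lemma sub3_Cons_sorted: "subseq [x,y,z] (b # W) \<Longrightarrow> sorted_wrt (<) W \<Longrightarrow> y < (z::nat)"
proof -
  assume a: "subseq [x,y,z] (b # W)" and s: "sorted_wrt (<) W"
  have "subseq [x,y,z] W \<or> (x = b \<and> subseq [y,z] W)" using a by (simp only: subseq3_Cons)
  then have "subseq [y,z] W" using subseq3_tail by metis
  then show ?thesis using s by (rule subseq2_sorted)
qed

lemma avoids_sorted: "sorted_wrt (<) W \<Longrightarrow> avoids_all GG (b # W)"
proof -
  assume s: "sorted_wrt (<) W"
  have "y < z" if "subseq [x,y,z] (b # W)" for x y z using that s by (rule sub3_Cons_sorted)
  then show ?thesis unfolding avoids_GG by (meson order.asym)
qed

lemma avoids_sorted2: "sorted_wrt (<) W \<Longrightarrow>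
  avoids_all GG (b # a # W) \<longleftrightarrow> (\<forall>z\<in>set W. \<not> (b < z \<and> z < a) \<and> \<not> (z < a \<and> a < b))"
proof -
  assume s: "sorted_wrt (<) W"
  have A: "subseq [x,y,z] (b # a # W) \<longleftrightarrow> (x = b \<and> y = a \<and> z \<in> set W) \<or> (subseq [x,y,z] (b # a # W) \<and> y < z)" for x y z
  proof
    assume h: "subseq [x,y,z] (b # a # W)"
    show "(x = b \<and> y = a \<and> z \<in> set W) \<or> (subseq [x,y,z] (b # a # W) \<and> y < z)"
    proof (cases "x = b \<and> y = a \<and> z \<in> set W")
      case False
      from h have "subseq [x,y,z] (a # W) \<or> (x = b \<and> subseq [y,z] (a # W))" by (simp only: subseq3_Cons)
      then have "subseq [y,z] W"
      proof
        assume "subseq [x,y,z] (a # W)"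
        then have "subseq [x,y,z] W \<or> (x = a \<and> subseq [y,z] W)" by (simp only: subseq3_Cons)
        then show ?thesis by (metis subseq3_tail)
      next
        assume "x = b \<and> subseq [y,z] (a # W)"
        then have "subseq [y,z] W \<or> (y = a \<and> z \<in> set W)" by (simp only: subseq2_Cons)
        then show ?thesis using False \<open>x = b \<and> subseq [y,z] (a # W)\<close> by metis
      qed
      then have "y < z" using s by (rule subseq2_sorted)
      then show ?thesis using h by (intro disjI2 conjI)
    qed simp
  next
    assume "(x = b \<and> y = a \<and> z \<in> set W) \<or> (subseq [x,y,z] (b # a # W) \<and> y < z)"
    then show "subseq [x,y,z] (b # a # W)"
    proof
      assume "x = b \<and> y = a \<and> z \<in> set W"
      then show ?thesis by (simp add: subseq_singleton_left)
    next
      assume "subseq [x,y,z] (b # a # W) \<and> y < z"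
      then show ?thesis by (rule conjunct1)
    qed
  qed
  show ?thesis
  proof
    assume av: "avoids_all GG (b # a # W)"
    show "\<forall>z\<in>set W. \<not> (b < z \<and> z < a) \<and> \<not> (z < a \<and> a < b)"
    proof (intro ballI conjI notI)
      fix z assume z: "z \<in> set W"
      then have sb: "subseq [b,a,z] (b # a # W)" using A[of b a z] by simp
      show False if "b < z \<and> z < a"
      proof -
        have "\<exists>x y w. subseq [x,y,w] (b # a # W) \<and> x < w \<and> w < y" using sb that by blast
        then show False using av unfolding avoids_GG by blast
      qed
      show False if "z < a \<and> a < b"
      proof -
        have "\<exists>x y w. subseq [x,y,w] (b # a # W) \<and> w < y \<and> y < x" using sb that by blast
        then show False using av unfolding avoids_GG by blast
      qed
    qed
  next
    assume R: "\<forall>z\<in>set W. \<not> (b < z \<and> z < a) \<and> \<not> (z < a \<and> a < b)"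
    have key: "\<not> (x < z \<and> z < y) \<and> \<not> (z < y \<and> y < x)" if "subseq [x,y,z] (b # a # W)" for x y z
    proof -
      have "(x = b \<and> y = a \<and> z \<in> set W) \<or> (subseq [x,y,z] (b # a # W) \<and> y < z)"
        using A[of x y z] that by blast
      then show ?thesis using R by fastforce
    qed
    show "avoids_all GG (b # a # W)" unfolding avoids_GG using key by blast
    qed
qed

definition ol :: "nat option \<Rightarrow> nat list" where
  "ol p = (case p of None \<Rightarrow> [] | Some a \<Rightarrow> [a])"

lemma ol_simps[simp]: "ol None = []" "ol (Some a) = [a]"
  by (simp_all add: ol_def)

fun gs :: "nat list \<Rightarrow> nat option \<Rightarrow> nat option \<Rightarrow> nat list \<Rightarrow> bool" where
  "gs W p B [] = True"
| "gs W p B (b # r) =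
   ((case p of None \<Rightarrow> True | Some a \<Rightarrow> \<not> (b < a \<and> (\<forall>w\<in>set W. w < a \<longrightarrow> w < b))) \<and>
    (if W = [] \<or> b < hd W then gs (b # W) None B r
     else (case B of None \<Rightarrow> True | Some c \<Rightarrow> b < c) \<and> gs W (Some b) (Some b) r))"

lemma sorted_Cons_hd: "sorted_wrt (<) W \<Longrightarrow> W = [] \<or> b < hd W \<Longrightarrow> sorted_wrt (<) (b # (W::nat list))"
  by (cases W) auto

lemma gs_Some_None: "gs W (Some a) B (b # r) \<Longrightarrow> gs W None B (b # r)"
  by simp

lemma good_run:
  "gs W p B inp \<Longrightarrow> sorted_wrt (<) W \<Longrightarrow> distinct (inp @ ol p @ W) \<Longrightarrow>
   (\<forall>a. p = Some a \<longrightarrow> W \<noteq> [] \<and> hd W < a \<and> B = Some a) \<Longrightarrow>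
   \<exists>D I. stack_run GG inp (ol p @ W) = D @ I \<and> sorted_wrt (>) D \<and> sorted_wrt (<) I \<and>
         (\<forall>c. B = Some c \<longrightarrow> (\<forall>d\<in>set D. d \<le> c))"
proof (induction inp arbitrary: W p B)
  case Nil
  have "\<forall>c. B = Some c \<longrightarrow> (\<forall>d\<in>set (ol p). d \<le> c)"
    using Nil.prems(4) by (cases p) auto
  moreover have "sorted_wrt (>) (ol p)" by (cases p) auto
  ultimately show ?case using Nil.prems(2) by (intro exI[of _ "ol p"] exI[of _ W]) (simp add: stack_run_Nil)
next
  case (Cons b r)
  have claim: "\<exists>D I. stack_run GG (b # r) W' = D @ I \<and> sorted_wrt (>) D \<and> sorted_wrt (<) I \<and>
         (\<forall>c. B' = Some c \<longrightarrow> (\<forall>d\<in>set D. d \<le> c))"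
    if g: "gs W' None B' (b # r)" and s: "sorted_wrt (<) W'" and d: "distinct (b # r @ W')" for W' B'
  proof -
    have run: "stack_run GG (b # r) W' = stack_run GG r (b # W')"
      by (rule sr_push) (rule avoids_sorted[OF s])
    show ?thesis
    proof (cases "W' = [] \<or> b < hd W'")
      case True
      then have g': "gs (b # W') None B' r" using g by simp
      have s': "sorted_wrt (<) (b # W')" using sorted_Cons_hd[OF s True] .
      have "distinct (r @ ol None @ b # W')" using d by auto
      from Cons.IH[OF g' s' this] show ?thesis unfolding run by simp
    next
      case False
      then have g': "gs W' (Some b) (Some b) r" and bc: "case B' of None \<Rightarrow> True | Some c \<Rightarrow> b < c"
        using g by simp_all
      have "b \<noteq> hd W'" using d False by (cases W') auto
      then have hb: "hd W' < b" using False by simp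
      have "distinct (r @ ol (Some b) @ W')" using d by auto
      from Cons.IH[OF g' s this] False hb obtain D I where
        DI: "stack_run GG r (ol (Some b) @ W') = D @ I" "sorted_wrt (>) D" "sorted_wrt (<) I"
            "\<forall>d\<in>set D. d \<le> b" by auto
      show ?thesis
        using DI bc unfolding run by (intro exI[of _ D] exI[of _ I]) (auto split: option.splits)
    qed
  qed
  show ?case
  proof (cases p)
    case None
    have g: "gs W None B (b # r)" using Cons.prems(1) None by simp
    have d: "distinct (b # r @ W)" using Cons.prems(3) None by simp
    show ?thesis using claim[OF g Cons.prems(2) d] None by simp
  next
    case (Some a)
    with Cons.prems have W: "W \<noteq> []" "hd W < a" "B = Some a" by auto
    have dist: "distinct (b # r @ a # W)" using Cons.prems Some by simp
    have chk: "\<not> (b < a \<and> (\<forall>w\<in>set W. w < a \<longrightarrow> w < b))" using Cons.prems(1) Some by simp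
    have hdW: "hd W \<in> set W" using W by simp
    have nav: "\<not> avoids_all GG (b # a # W)"
    proof (cases "b < a")
      case True
      then obtain w where w: "w \<in> set W" "w < a" "\<not> w < b" using chk by auto
      have "w \<noteq> b" using dist w by auto
      then have "b < w" using w by simp
      then show ?thesis using avoids_sorted2[OF Cons.prems(2)] w by auto
    next
      case False
      then have "a < b" using dist by auto
      then show ?thesis using avoids_sorted2[OF Cons.prems(2)] hdW W by auto
    qed
    have run: "stack_run GG (b # r) (a # W) = a # stack_run GG (b # r) W"
      by (rule sr_pop[OF nav])
    have g: "gs W None B (b # r)" using Cons.prems(1) Some by simp
    obtain D I where DI: "stack_run GG (b # r) W = D @ I" "sorted_wrt (>) D" "sorted_wrt (<) I"
            "\<forall>d\<in>set D. d \<le> a"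
      using claim[OF g Cons.prems(2)] dist W by auto
    have "set (D @ I) = set (b # r) \<union> set W" using DI(1) stack_run_set[of GG "b # r" W] by simp
    then have "set D \<subseteq> set (b # r) \<union> set W" by auto
    have lt: "\<forall>d\<in>set D. d < a"
    proof
      fix d assume "d \<in> set D"
      then have "d \<noteq> a" using \<open>set D \<subseteq> set (b # r) \<union> set W\<close> dist by auto
      then show "d < a" using DI(4) \<open>d \<in> set D\<close> by fastforce
    qed
    have "stack_run GG (b # r) (ol p @ W) = (a # D) @ I" using run DI(1) Some by simp
    moreover have "sorted_wrt (>) (a # D)" using lt DI(2) by simp
    moreover have "\<forall>c. B = Some c \<longrightarrow> (\<forall>d\<in>set (a # D). d \<le> c)" using lt W(3) by auto
    ultimately show ?thesis using DI(3) by blast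
  qed
qed

lemma sub_before:
  "(\<And>s. subseq [a,w] s \<Longrightarrow> \<not> avoids_all T (z # s)) \<Longrightarrow>
   subseq [a,w] stk \<Longrightarrow> z \<in> set inp \<Longrightarrow> subseq [a, z] (stack_run T inp stk)"
proof (induction T inp stk rule: stack_run.induct)
  case (1 T) then show ?case by simp
next
  case (2 T y ys) then show ?case by simp
next
  case (3 T x xs stk)
  show ?case
  proof (cases "avoids_all T (x # stk)")
    case True
    then have "x \<noteq> z" using "3.prems"(1,2) by blast
    then have "z \<in> set xs" using "3.prems"(3) by simp
    have "subseq [a,w] (x # stk)" using "3.prems"(2) by (simp add: subseq_Cons_right_iff)
    from "3.IH"(1)[OF True "3.prems"(1) this \<open>z \<in> set xs\<close>] show ?thesis
      by (simp add: sr_push[OF True])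
  next
    case False
    show ?thesis
    proof (cases stk)
      case Nil then show ?thesis using "3.prems"(2) by simp
    next
      case (Cons y ys)
      have run: "stack_run T (x # xs) stk = y # stack_run T (x # xs) ys"
        using False Cons sr_pop by simp
      show ?thesis
      proof (cases "y = a")
        case True
        have "z \<in> set (stack_run T (x # xs) ys)" using "3.prems"(3) stack_run_set[of T "x # xs" ys] by auto
        then show ?thesis using run True by (simp add: subseq_singleton_left)
      next
        case ya: False
        have "subseq [a,w] ys" using "3.prems"(2) Cons ya by (simp add: subseq2_Cons)
        from "3.IH"(3)[OF False Cons "3.prems"(1) this "3.prems"(3)]
        have "subseq [a, z] (y # stack_run T (x # xs) ys)" by (rule list_emb_Cons)
        then show ?thesis using run by simp
      qed
    qed
  qed
qed

lemma sub_before_GG: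
  "subseq [a,w] stk \<Longrightarrow> z < w \<Longrightarrow> w < a \<Longrightarrow> z \<in> set inp \<Longrightarrow> subseq [a, z] (stack_run GG inp stk)"
proof (rule sub_before)
  fix s assume "subseq [a,w] s" "z < w" "w < a"
  then have "subseq [z,a,w] (z # s)" by simp
  then show "\<not> avoids_all GG (z # s)" unfolding avoids_GG using \<open>z < w\<close> \<open>w < a\<close> by blast
qed

lemma subseq2_decomp: "subseq [x,y] L \<longleftrightarrow> (\<exists>L1 L2. L = L1 @ y # L2 \<and> x \<in> set L1)"
proof (induction L)
  case Nil then show ?case by simp
next
  case (Cons u L)
  show ?case
  proof
    assume "subseq [x,y] (u # L)"
    then have "subseq [x,y] L \<or> (x = u \<and> y \<in> set L)" by (simp only: subseq2_Cons)
    then show "\<exists>L1 L2. u # L = L1 @ y # L2 \<and> x \<in> set L1"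
    proof
      assume "subseq [x,y] L"
      then obtain L1 L2 where "L = L1 @ y # L2" "x \<in> set L1" using Cons.IH by blast
      then show ?thesis by (intro exI[of _ "u # L1"] exI[of _ L2]) simp
    next
      assume "x = u \<and> y \<in> set L"
      then obtain L1 L2 where "L = L1 @ y # L2" "x = u" by (meson split_list)
      then show ?thesis by (intro exI[of _ "u # L1"] exI[of _ L2]) simp
    qed
  next
    assume "\<exists>L1 L2. u # L = L1 @ y # L2 \<and> x \<in> set L1"
    then obtain L1 L2 where L: "u # L = L1 @ y # L2" "x \<in> set L1" by blast
    have "subseq [x] L1" using L(2) by (simp add: subseq_singleton_left)
    then have "subseq ([x] @ [y]) (L1 @ [y] @ L2)"
      by (intro list_emb_append_mono) auto
    then show "subseq [x,y] (u # L)" using L(1) by simp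
  qed
qed

lemma decomp_unique: "distinct (L1 @ y # L2) \<Longrightarrow> L1 @ y # L2 = L1' @ y # L2' \<Longrightarrow> L1 = L1' \<and> L2 = L2'"
proof -
  assume d: "distinct (L1 @ y # L2)" and e: "L1 @ y # L2 = L1' @ y # L2'"
  have n1: "y \<notin> set L1" using d by simp
  have "distinct (L1' @ y # L2')" using d e by simp
  then have n2: "y \<notin> set L1'" by simp
  have "takeWhile (\<lambda>u. u \<noteq> y) (L1 @ y # L2) = L1" using n1 by (induction L1) auto
  moreover have "takeWhile (\<lambda>u. u \<noteq> y) (L1' @ y # L2') = L1'" using n2 by (induction L1') auto
  ultimately have "L1 = L1'" using e by simp
  then show ?thesis using e by simp
qed

lemma subseq3_combine: "distinct L \<Longrightarrow> subseq [x,y] L \<Longrightarrow> subseq [y,v] L \<Longrightarrow> subseq [x,y,v] L"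
proof -
  assume d: "distinct L" and a: "subseq [x,y] L" and b: "subseq [y,v] L"
  obtain L1 L2 where L: "L = L1 @ y # L2" "x \<in> set L1" using subseq2_decomp[THEN iffD1, OF a] by blast
  obtain M1 M2 where M: "L = M1 @ v # M2" "y \<in> set M1" using subseq2_decomp[THEN iffD1, OF b] by blast
  obtain K1 K2 where K: "M1 = K1 @ y # K2" using M(2) split_list by fast
  have "L1 @ y # L2 = K1 @ y # (K2 @ v # M2)" using L M K by simp
  then have "L2 = K2 @ v # M2" using decomp_unique[of L1 y L2 K1 "K2 @ v # M2"] d L(1) by blast
  then have "v \<in> set L2" by simp
  have "subseq [x] L1" using L(2) by (simp add: subseq_singleton_left)
  moreover have "subseq [y,v] (y # L2)" using \<open>v \<in> set L2\<close> by (simp add: subseq_singleton_left)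
  ultimately have "subseq ([x] @ [y,v]) (L1 @ y # L2)" by (rule list_emb_append_mono)
  then show ?thesis using L by simp
qed

lemma stack_run_distinct: "distinct (stack_run T inp stk) \<longleftrightarrow> distinct (inp @ stk)"
  by (rule mset_eq_imp_distinct_iff) (simp add: stack_run_mset)

lemma subseq_app3: "subseq [c] P \<Longrightarrow> subseq [b,z] X \<Longrightarrow> subseq [c,b,z] (P @ X)"
  using list_emb_append_mono[of "(=)" "[c]" P "[b,z]" X] by simp

lemma bad_run:
  "\<not> gs W p B inp \<Longrightarrow> sorted_wrt (<) W \<Longrightarrow> distinct (P @ inp @ ol p @ W) \<Longrightarrow>
   (\<forall>a. p = Some a \<longrightarrow> W \<noteq> [] \<and> hd W < a \<and> B = Some a) \<Longrightarrow>
   (p = None \<longrightarrow> (\<forall>c. B = Some c \<longrightarrow> c \<in> set P)) \<Longrightarrow>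
   z \<in> set inp \<union> set W \<Longrightarrow> (\<forall>v \<in> set P \<union> set inp \<union> set (ol p) \<union> set W. z \<le> v) \<Longrightarrow>
   contains (P @ stack_run GG inp (ol p @ W)) [2,3,1]"
proof (induction inp arbitrary: P W p B)
  case Nil then show ?case by simp
next
  case (Cons b r)
  have claim: "contains (Q @ stack_run GG (b # r) W') [2,3,1]"
    if g: "\<not> gs W' None B' (b # r)" and s: "sorted_wrt (<) W'" and d: "distinct (Q @ b # r @ W')"
       and Bc: "\<forall>c. B' = Some c \<longrightarrow> c \<in> set Q" and zin: "z \<in> set (b # r) \<union> set W'"
       and zle: "\<forall>v \<in> set Q \<union> set (b # r) \<union> set W'. z \<le> v" for Q W' B'
  proof -
    have run: "stack_run GG (b # r) W' = stack_run GG r (b # W')"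
      by (rule sr_push) (rule avoids_sorted[OF s])
    show ?thesis
    proof (cases "W' = [] \<or> b < hd W'")
      case True
      then have g': "\<not> gs (b # W') None B' r" using g by simp
      have s': "sorted_wrt (<) (b # W')" using sorted_Cons_hd[OF s True] .
      have d': "distinct (Q @ r @ ol None @ b # W')" using d by auto
      have z': "z \<in> set r \<union> set (b # W')" using zin by auto
      have zle': "\<forall>v \<in> set Q \<union> set r \<union> set (ol None) \<union> set (b # W'). z \<le> v" using zle by auto
      from Cons.IH[OF g' s' d' _ _ z' zle'] Bc show ?thesis unfolding run by simp
    next
      case False
      then have nW: "W' \<noteq> []" by simp
      have "b \<noteq> hd W'" using d nW by (cases W') auto
      then have hb: "hd W' < b" using False by simp
      have hdin: "hd W' \<in> set W'" using nW by simp
      have zhd: "z \<le> hd W'" using zle hdin by blast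
      have zb: "z \<noteq> b" using zhd hb by simp
      then have zin': "z \<in> set r \<union> set W'" using zin by simp
      have g2: "\<not> ((case B' of None \<Rightarrow> True | Some c \<Rightarrow> b < c) \<and> gs W' (Some b) (Some b) r)"
        using g False by simp
      show ?thesis
      proof (cases "case B' of None \<Rightarrow> True | Some c \<Rightarrow> b < c")
        case True
        then have g': "\<not> gs W' (Some b) (Some b) r" using g2 by simp
        have d': "distinct (Q @ r @ ol (Some b) @ W')" using d by auto
        have zle': "\<forall>v \<in> set Q \<union> set r \<union> set (ol (Some b)) \<union> set W'. z \<le> v" using zle by auto
        from Cons.IH[OF g' s d' _ _ zin' zle'] hb nW show ?thesis unfolding run by simp
      next
        case False
        then obtain c where c: "B' = Some c" "\<not> b < c" by (cases B') auto
        have cO: "c \<in> set Q" using Bc c by simp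
        have "c \<noteq> b" using d cO by auto
        then have cb: "c < b" using c by simp
        have zc: "z < c"
        proof -
          have "z \<le> c" using zle cO by blast
          moreover have "z \<noteq> c" using d cO zin' by auto
          ultimately show ?thesis by simp
        qed
        have bz: "subseq [b, z] (stack_run GG r (b # W'))"
        proof (cases "z \<in> set W'")
          case True
          then have "subseq [b, z] (b # W')" by (simp add: subseq_singleton_left)
          then show ?thesis by (rule subseq_order.order_trans[OF _ stack_run_subseq])
        next
          case False
          then have zr: "z \<in> set r" using zin' by simp
          have "z \<noteq> hd W'" using False hdin by auto
          then have "z < hd W'" using zhd by simp
          moreover have "subseq [b, hd W'] (b # W')" using hdin by (simp add: subseq_singleton_left)
          ultimately show ?thesis using sub_before_GG[OF _ _ hb zr] by blast
        qed
        have "subseq [c] Q" using cO by (simp add: subseq_singleton_left)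
        from subseq_app3[OF this bz] have "subseq [c,b,z] (Q @ stack_run GG (b # r) W')"
          unfolding run .
        then show ?thesis using contains_231I zc cb by blast
      qed
    qed
  qed
  show ?case
  proof (cases p)
    case None
    have g: "\<not> gs W None B (b # r)" using Cons.prems(1) None by simp
    have d: "distinct (P @ b # r @ W)" using Cons.prems(3) None by simp
    have Bc: "\<forall>c. B = Some c \<longrightarrow> c \<in> set P" using Cons.prems(5) None by simp
    have zle: "\<forall>v \<in> set P \<union> set (b # r) \<union> set W. z \<le> v" using Cons.prems(7) by auto
    show ?thesis using claim[OF g Cons.prems(2) d Bc Cons.prems(6) zle] None by simp
  next
    case (Some a)
    have W: "W \<noteq> []" "hd W < a" "B = Some a" using Cons.prems(4) Some by auto
    have dist: "distinct (P @ b # r @ a # W)" using Cons.prems(3) Some by simp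
    have hdW: "hd W \<in> set W" using W by simp
    have zhd: "z \<le> hd W" using Cons.prems(7) hdW by blast
    show ?thesis
    proof (cases "b < a \<and> (\<forall>w\<in>set W. w < a \<longrightarrow> w < b)")
      case True
      have av: "avoids_all GG (b # a # W)"
        using avoids_sorted2[OF Cons.prems(2)] True by auto
      have run: "stack_run GG (b # r) (a # W) = stack_run GG r (b # a # W)"
        by (rule sr_push[OF av])
      have hb: "hd W < b" using True W hdW by blast
      have zb: "z < b" using zhd hb by simp
      have bad: "subseq [b, a, z] (stack_run GG r (b # a # W))"
      proof (cases "z \<in> set W")
        case True
        then have "subseq [b, a, z] (b # a # W)" by (simp add: subseq_singleton_left)
        then show ?thesis by (rule subseq_order.order_trans[OF _ stack_run_subseq])
      next
        case False
        then have zr: "z \<in> set r" using Cons.prems(6) zb by auto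
        have "z \<noteq> hd W" using False hdW by auto
        then have "z < hd W" using zhd by simp
        moreover have "subseq [a, hd W] (b # a # W)" using hdW by (simp add: subseq_singleton_left)
        ultimately have az: "subseq [a, z] (stack_run GG r (b # a # W))"
          using sub_before_GG[OF _ _ W(2) zr] by blast
        have "subseq [b, a] (b # a # W)" by simp
        then have ba: "subseq [b, a] (stack_run GG r (b # a # W))"
          by (rule subseq_order.order_trans[OF _ stack_run_subseq])
        have "distinct (stack_run GG r (b # a # W))"
          using dist by (simp add: stack_run_distinct)
        from subseq3_combine[OF this ba az] show ?thesis .
      qed
      then have "subseq [b, a, z] (P @ stack_run GG (b # r) (ol p @ W))"
        using run Some by (simp add: list_emb_append2)
      then show ?thesis using contains_231I zb True by blast
    next
      case False
      have nav: "\<not> avoids_all GG (b # a # W)"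
      proof (cases "b < a")
        case True
        then obtain w where w: "w \<in> set W" "w < a" "\<not> w < b" using False by auto
        have "w \<noteq> b" using dist w by auto
        then have "b < w" using w by simp
        then show ?thesis using avoids_sorted2[OF Cons.prems(2)] w by auto
      next
        case False
        then have "a < b" using dist by auto
        then show ?thesis using avoids_sorted2[OF Cons.prems(2)] hdW W by auto
      qed
      have run: "stack_run GG (b # r) (a # W) = a # stack_run GG (b # r) W"
        by (rule sr_pop[OF nav])
      have g: "\<not> gs W None B (b # r)" using Cons.prems(1) Some False by simp
      have d: "distinct ((P @ [a]) @ b # r @ W)" using dist by auto
      have Bc: "\<forall>c. B = Some c \<longrightarrow> c \<in> set (P @ [a])" using W by simp
      have zin: "z \<in> set (b # r) \<union> set W" using Cons.prems(6) by simp
      have zle: "\<forall>v \<in> set (P @ [a]) \<union> set (b # r) \<union> set W. z \<le> v" using Cons.prems(7) Some by auto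
      from claim[OF g Cons.prems(2) d Bc zin zle] show ?thesis using run Some by simp
    qed
  qed
qed

abbreviation W21 :: "nat list set" where "W21 \<equiv> {[2,1]}"

lemma avoids_21: "avoids_all W21 xs \<longleftrightarrow> \<not> (\<exists>a b. subseq [a,b] xs \<and> b < a)"
  unfolding avoids_all_def contains_21[symmetric] by simp

lemma av21_sorted: "sorted_wrt (<) L \<Longrightarrow> avoids_all W21 L"
proof -
  assume s: "sorted_wrt (<) L"
  have "a < b" if "subseq [a,b] L" for a b using that s by (rule subseq2_sorted)
  then show ?thesis unfolding avoids_21 by (meson order.asym)
qed

lemma nav21: "y < x \<Longrightarrow> \<not> avoids_all W21 (x # y # ys)"
proof -
  assume "y < x"
  moreover have "subseq [x,y] (x # y # ys)" by simp
  ultimately show ?thesis unfolding avoids_21 by blast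
qed

lemma strict_sorted_sorted: "sorted_wrt (<) (L::nat list) \<Longrightarrow> sorted L"
  by (induction L) auto

lemma west_D:
  "sorted_wrt (>) D \<Longrightarrow> sorted_wrt (<) stk \<Longrightarrow> (\<forall>d\<in>set D. \<forall>s\<in>set stk. d < s) \<Longrightarrow>
   stack_run W21 (D @ I) stk = stack_run W21 I (rev D @ stk)"
proof (induction D arbitrary: stk)
  case Nil then show ?case by simp
next
  case (Cons d D)
  have s: "sorted_wrt (<) (d # stk)" using Cons.prems by simp
  have "stack_run W21 ((d # D) @ I) stk = stack_run W21 (D @ I) (d # stk)"
    using sr_push[OF av21_sorted[OF s]] by simp
  also have "\<dots> = stack_run W21 I (rev D @ d # stk)"
    using Cons.IH[OF _ s] Cons.prems by simp
  finally show ?case by simp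
qed

lemma west_I:
  "T = W21 \<Longrightarrow> sorted_wrt (<) inp \<Longrightarrow> sorted_wrt (<) stk \<Longrightarrow> distinct (inp @ stk) \<Longrightarrow>
   sorted (stack_run T inp stk)"
proof (induction T inp stk rule: stack_run.induct)
  case (1 T) then show ?case by simp
next
  case (2 T y ys) then show ?case by (simp add: stack_run_Nil strict_sorted_sorted del: sorted_wrt.simps)
next
  case (3 T x xs stk)
  show ?case
  proof (cases "avoids_all T (x # stk)")
    case True
    have s: "sorted_wrt (<) (x # stk)"
    proof (cases stk)
      case (Cons y ys)
      have "\<not> y < x" using True Cons nav21 "3.prems"(1) by blast
      moreover have "x \<noteq> y" using "3.prems"(4) Cons by auto
      ultimately have "x < y" by simp
      then show ?thesis using "3.prems"(3) Cons by auto
    qed simp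
    have "sorted (stack_run T xs (x # stk))"
      using "3.IH"(1)[OF True "3.prems"(1) _ s] "3.prems" by auto
    then show ?thesis using sr_push[OF True] by simp
  next
    case False
    show ?thesis
    proof (cases stk)
      case Nil
      have "avoids_all T [x]" using "3.prems"(1) av21_sorted[of "[x]"] by simp
      then show ?thesis using False Nil by simp
    next
      case (Cons y ys)
      have run: "stack_run T (x # xs) stk = y # stack_run T (x # xs) ys" using sr_pop False Cons by simp
      have yx: "y < x"
      proof (rule ccontr)
        assume "\<not> y < x"
        moreover have "x \<noteq> y" using "3.prems"(4) Cons by auto
        ultimately have "x < y" by simp
        then have "sorted_wrt (<) (x # stk)" using "3.prems"(3) Cons by auto
        then show False using False av21_sorted "3.prems"(1) by blast
      qed
      have rs: "sorted (stack_run T (x # xs) ys)"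
        using "3.IH"(3)[OF False Cons "3.prems"(1) "3.prems"(2)] "3.prems"(3,4) Cons by auto
      have "\<forall>v \<in> set (stack_run T (x # xs) ys). y \<le> v"
      proof
        fix v assume "v \<in> set (stack_run T (x # xs) ys)"
        then have "v = x \<or> v \<in> set xs \<or> v \<in> set ys" using stack_run_set[of T "x # xs" ys] by auto
        then show "y \<le> v" using yx "3.prems"(2,3) Cons by auto
      qed
      then show ?thesis using rs run by simp
    qed
  qed
qed

lemma west_good: "sorted_wrt (>) D \<Longrightarrow> sorted_wrt (<) I \<Longrightarrow> distinct (D @ I) \<Longrightarrow> sorted (west_s (D @ I))"
proof -
  assume D: "sorted_wrt (>) D" and I: "sorted_wrt (<) I" and d: "distinct (D @ I)"
  have "west_s (D @ I) = stack_run W21 I (rev D)"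
    unfolding west_s_def s_map_def using west_D[OF D, of "[]" I] by simp
  moreover have "sorted_wrt (<) (rev D)" using D by (simp add: sorted_wrt_rev)
  ultimately show ?thesis using west_I[of W21 I "rev D"] I d by auto
qed

lemma west_bad:
  "T = W21 \<Longrightarrow> distinct (inp @ stk) \<Longrightarrow> (c \<in> set stk \<and> subseq [b,a] inp) \<or> subseq [c,b,a] inp \<Longrightarrow> c < b \<Longrightarrow>
   subseq [c,a] (stack_run T inp stk)"
proof (induction T inp stk rule: stack_run.induct)
  case (1 T) then show ?case by simp
next
  case (2 T y ys) then show ?case by simp
next
  case (3 T x xs stk)
  show ?case
  proof (cases "avoids_all T (x # stk)")
    case True
    have "(c \<in> set (x # stk) \<and> subseq [b,a] xs) \<or> subseq [c,b,a] xs"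
      using "3.prems"(3)
    proof
      assume h: "c \<in> set stk \<and> subseq [b,a] (x # xs)"
      have "x \<noteq> b"
      proof
        assume "x = b"
        have "subseq [x, c] (x # stk)" using h by (simp add: subseq_singleton_left)
        moreover have "avoids_all W21 (x # stk)" using True "3.prems"(1) by simp
        moreover have "c < x" using "3.prems"(4) \<open>x = b\<close> by simp
        ultimately show False unfolding avoids_21 by blast
      qed
      then have "subseq [b,a] xs" using h by (simp add: subseq2_Cons)
      then show ?thesis using h by simp
    next
      assume "subseq [c,b,a] (x # xs)"
      then have "subseq [c,b,a] xs \<or> (c = x \<and> subseq [b,a] xs)" by (simp only: subseq3_Cons)
      then show ?thesis by auto
    qed
    then have "subseq [c,a] (stack_run T xs (x # stk))"
      using "3.IH"(1)[OF True "3.prems"(1)] "3.prems"(2,4) by simp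
    then show ?thesis using sr_push[OF True] by simp
  next
    case False
    show ?thesis
    proof (cases stk)
      case Nil
      have "avoids_all T [x]" using "3.prems"(1) av21_sorted[of "[x]"] by simp
      then show ?thesis using False Nil by simp
    next
      case (Cons y ys)
      have run: "stack_run T (x # xs) stk = y # stack_run T (x # xs) ys" using sr_pop False Cons by simp
      have ain: "a \<in> set (x # xs)" using "3.prems"(3)
        by (metis subseq_Cons' subseq_singleton_left)
      show ?thesis
      proof (cases "y = c")
        case True
        have "a \<in> set (stack_run T (x # xs) ys)" using ain stack_run_set[of T "x # xs" ys] by auto
        then show ?thesis using run True by (simp add: subseq_singleton_left)
      next
        case False
        have "(c \<in> set ys \<and> subseq [b,a] (x # xs)) \<or> subseq [c,b,a] (x # xs)"
          using "3.prems"(3) Cons False by auto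
        then have "subseq [c,a] (stack_run T (x # xs) ys)"
          using "3.IH"(3)[OF \<open>\<not> avoids_all T (x # stk)\<close> Cons "3.prems"(1)] "3.prems"(2,4) Cons by simp
        then have "subseq [c,a] (y # stack_run T (x # xs) ys)" by (rule list_emb_Cons)
        then show ?thesis using run by simp
      qed
    qed
  qed
qed

lemma sort_char:
  assumes x: "x \<in> permutations_of_set {1..n}"
  shows "west_s (s_map GG x) = [1..<n+1] \<longleftrightarrow> gs [] None None x"
proof
  have sx: "set x = {1..n}" and dx: "distinct x" using x by (auto simp: permutations_of_set_def)
  assume L: "west_s (s_map GG x) = [1..<n+1]"
  show "gs [] None None x"
  proof (rule ccontr)
    assume ng: "\<not> gs [] None None x"
    then have "x \<noteq> []" by auto
    then have "n \<ge> 1" using sx by (cases "n = 0") auto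
    then have z: "1 \<in> set x \<union> set []" using sx by simp
    have zle: "\<forall>v \<in> set [] \<union> set x \<union> set (ol None) \<union> set []. (1::nat) \<le> v" using sx by auto
    have "contains ([] @ stack_run GG x (ol None @ [])) [2,3,1]"
      by (rule bad_run[OF ng _ _ _ _ z zle]) (use dx in auto)
    then have "contains (s_map GG x) [2,3,1]" by (simp add: s_map_def)
    then obtain w where w: "subseq w (s_map GG x)" "order_iso w [2,3,1]" unfolding contains_def by blast
    then have "length w = 3" unfolding order_iso_def by simp
    then obtain c b a where wc: "w = [c,b,a]" using len3 by blast
    have ord: "a < c" "c < b" using w(2) wc by (auto simp: order_iso3)
    have "distinct (s_map GG x)" using dx by (simp add: s_map_def stack_run_distinct)
    then have "subseq [c,a] (stack_run W21 (s_map GG x) [])"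
      using west_bad[of W21 "s_map GG x" "[]" c b a] w(1) wc ord by simp
    then have "subseq [c,a] [1..<n+1]" using L by (simp add: west_s_def s_map_def)
    moreover have "sorted_wrt (<) [1..<n+1]" by (rule sorted_wrt_upt)
    ultimately have "c < a" by (rule subseq2_sorted)
    then show False using ord by simp
  qed
next
  have sx: "set x = {1..n}" and dx: "distinct x" using x by (auto simp: permutations_of_set_def)
  assume g: "gs [] None None x"
  obtain D I where DI: "stack_run GG x (ol None @ []) = D @ I" "sorted_wrt (>) D" "sorted_wrt (<) I"
    using good_run[OF g] dx by auto
  have sm: "s_map GG x = D @ I" using DI(1) by (simp add: s_map_def)
  have "distinct (stack_run GG x [])" using dx by (simp add: stack_run_distinct)
  then have dDI: "distinct (D @ I)" using sm by (simp only: s_map_def)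
  have so: "sorted (west_s (D @ I))" using west_good[OF DI(2,3) dDI] .
  have dw: "distinct (west_s (D @ I))" using dDI by (simp add: west_s_def s_map_def stack_run_distinct)
  have "set (west_s (D @ I)) = set x"
    using sm stack_run_set[of GG x "[]"] stack_run_set[of W21 "D @ I" "[]"]
    by (simp add: west_s_def s_map_def)
  then have "set (west_s (D @ I)) = set [1..<n+1]" using sx by auto
  moreover have "sorted [1..<n+1]" "distinct [1..<n+1]" by (rule sorted_upt, rule distinct_upt)
  ultimately have "west_s (D @ I) = [1..<n+1]"
    using sorted_distinct_set_unique[OF so dw] by blast
  then show "west_s (s_map GG x) = [1..<n+1]" using sm by simp
qed

section \<open>Insertion of the maximum\<close>

lemma gs_bottom:
  "W \<noteq> [] \<Longrightarrow> (\<forall>v\<in>set W \<union> set y \<union> set (ol p). v < N) \<Longrightarrow> gs (W @ [N]) p B y = gs W p B y"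
proof (induction y arbitrary: W p B)
  case Nil then show ?case by simp
next
  case (Cons b r)
  have hd: "hd (W @ [N]) = hd W" using Cons.prems(1) by simp
  have chk: "(\<forall>w\<in>set (W @ [N]). w < a \<longrightarrow> w < b) = (\<forall>w\<in>set W. w < a \<longrightarrow> w < b)" if "p = Some a" for a
    using Cons.prems(2) that by auto
  have i1: "gs (b # W @ [N]) None B r = gs (b # W) None B r"
    using Cons.IH[of "b # W" None B] Cons.prems(2) by simp
  have i2: "gs (W @ [N]) (Some b) (Some b) r = gs W (Some b) (Some b) r"
    using Cons.IH[of W "Some b" "Some b"] Cons.prems by simp
  show ?case
    using hd chk i1 i2 Cons.prems(1) by (cases p) auto
qed

lemma gs_Binf: "(\<forall>v\<in>set y. v < N) \<Longrightarrow> gs W p (Some N) y = gs W p None y"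
proof (induction y arbitrary: W p)
  case Nil then show ?case by simp
next
  case (Cons b r)
  have i1: "gs (b # W) None (Some N) r = gs (b # W) None None r"
    using Cons.IH Cons.prems by simp
  show ?case using i1 Cons.prems by simp
qed

lemma gs_dec: "sorted_wrt (>) q \<Longrightarrow> (\<forall>a\<in>set q. \<forall>w\<in>set W. a < w) \<Longrightarrow>
   gs W None B (q @ z) = gs (rev q @ W) None B z"
proof (induction q arbitrary: W)
  case Nil then show ?case by simp
next
  case (Cons a q)
  have lr: "W = [] \<or> a < hd W" using Cons.prems(2) by (cases W) auto
  have "gs W None B ((a # q) @ z) = gs (a # W) None B (q @ z)" using lr by simp
  also have "\<dots> = gs (rev q @ a # W) None B z"
    using Cons.IH[of "a # W"] Cons.prems by auto
  finally show ?case by simp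
qed

lemma gs_kill:
  "W \<noteq> [] \<Longrightarrow> (\<forall>w\<in>set W. w < N) \<Longrightarrow> N \<in> set zs \<Longrightarrow> (\<forall>v\<in>set zs. v \<le> N) \<Longrightarrow> c < N \<Longrightarrow>
   (\<forall>a. p = Some a \<longrightarrow> a < N) \<Longrightarrow> \<not> gs W p (Some c) zs"
proof (induction zs arbitrary: W p c)
  case Nil then show ?case by simp
next
  case (Cons z zs)
  have hdW: "hd W < N" using Cons.prems(1,2) by simp
  show ?case
  proof (cases "z = N")
    case True
    then have "\<not> (W = [] \<or> z < hd W)" using Cons.prems(1) hdW by simp
    then show ?thesis using True Cons.prems(5) by (simp split: option.splits)
  next
    case False
    then have zN: "z < N" using Cons.prems(4) by auto
    have NZ: "N \<in> set zs" using Cons.prems(3) False by simp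
    show ?thesis
    proof (cases "W = [] \<or> z < hd W")
      case True
      have "\<not> gs (z # W) None (Some c) zs"
        using Cons.IH[where W="z # W" and p=None and c=c] Cons.prems zN NZ by auto
      then show ?thesis using True by simp
    next
      case False
      have "\<not> gs W (Some z) (Some z) zs"
        using Cons.IH[where W=W and p="Some z" and c=z] Cons.prems zN NZ by auto
      then show ?thesis using False by simp
    qed
  qed
qed

fun dp :: "nat list \<Rightarrow> nat" where
  "dp [] = 0"
| "dp [a] = 1"
| "dp (a # b # r) = (if b < a then Suc (dp (b # r)) else 1)"

definition tp :: "nat list \<Rightarrow> bool" where
  "tp y \<longleftrightarrow> dp y = length y \<or> y ! dp y < y ! 0"

definition Lp :: "nat list \<Rightarrow> nat" where
  "Lp y = dp y + (if tp y then 1 else 0)"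

lemma dp_le: "dp y \<le> length y"
  by (induction y rule: dp.induct) auto

lemma dp_pos: "y \<noteq> [] \<Longrightarrow> dp y \<ge> 1"
  by (induction y rule: dp.induct) auto

lemma dec_le_hd: "sorted_wrt (>) (b # t) \<Longrightarrow> v \<in> set (b # t) \<Longrightarrow> v \<le> (b::nat)"
  by auto

lemma dec_take_iff: "sorted_wrt (>) (take k y) \<longleftrightarrow> (k \<le> dp y \<or> dp y = length y)"
proof (induction y arbitrary: k rule: dp.induct)
  case 1 then show ?case by simp
next
  case (2 a) then show ?case by (cases k) auto
next
  case (3 a b r)
  show ?case
  proof (cases k)
    case 0 then show ?thesis by simp
  next
    case (Suc k')
    have tk: "take k (a # b # r) = a # take k' (b # r)" using Suc by simp
    show ?thesis
    proof (cases "b < a")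
      case True
      have "sorted_wrt (>) (take k' (b # r)) \<Longrightarrow> \<forall>v\<in>set (take k' (b # r)). v < a"
      proof (cases k')
        case (Suc k'')
        assume s: "sorted_wrt (>) (take k' (b # r))"
        then have "sorted_wrt (>) (b # take k'' r)" using Suc by simp
        then have "\<forall>v\<in>set (b # take k'' r). v \<le> b" by auto
        then show ?thesis using True Suc by auto
      qed simp
      then have "sorted_wrt (>) (take k (a # b # r)) \<longleftrightarrow> sorted_wrt (>) (take k' (b # r))"
        using tk by auto
      then show ?thesis using "3.IH"[OF True, of k'] True Suc by simp
    next
      case False
      have "sorted_wrt (>) (take k (a # b # r)) \<longleftrightarrow> k' = 0"
      proof
        assume "sorted_wrt (>) (take k (a # b # r))"
        then show "k' = 0" using tk False by (cases k') auto
      qed (simp add: tk)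
      then show ?thesis using False Suc by simp
    qed
  qed
qed

lemma Lp_pos: "Lp y \<ge> 1"
  unfolding Lp_def tp_def by (cases "y = []") (auto dest: dp_pos)

lemma Lp_le: "Lp y \<le> dp y + 1"
  unfolding Lp_def by simp

lemma dec_all_le_hd: "sorted_wrt (>) q \<Longrightarrow> q \<noteq> [] \<Longrightarrow> v \<in> set q \<Longrightarrow> v \<le> hd (q::nat list)"
  by (cases q) auto

lemma dec_all_ge_last: "sorted_wrt (>) q \<Longrightarrow> q \<noteq> [] \<Longrightarrow> v \<in> set q \<Longrightarrow> last (q::nat list) \<le> v"
proof -
  assume s: "sorted_wrt (>) q" and ne: "q \<noteq> []" and v: "v \<in> set q"
  have e: "q = butlast q @ [last q]" using ne by simp
  then have "sorted_wrt (>) (butlast q @ [last q])" using s by simp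
  then have "\<forall>x\<in>set (butlast q). last q < x" by (simp add: sorted_wrt_append)
  moreover have "v \<in> set (butlast q) \<or> v = last q" using v e by (metis butlast_append in_set_butlast_appendI last_in_set rotate1.simps(2) set_rotate1 set_ConsD set_append)
  ultimately show ?thesis by auto
qed

lemma key_ins:
  assumes d: "distinct y" and lt: "\<forall>v\<in>set y. v < N" and il: "i \<le> length y"
  shows "gs [] None None (take i y @ N # drop i y) \<longleftrightarrow> gs [] None None y \<and> i < Lp y"
proof (cases "i = 0")
  case True
  show ?thesis
  proof (cases y)
    case Nil then show ?thesis using True Lp_pos[of y] by simp
  next
    case (Cons b r)
    have bN: "b < N" using lt Cons by simp
    have "gs [] None None (take i y @ N # drop i y) = gs ([b] @ [N]) None None r"
      using True Cons bN by simp
    also have "\<dots> = gs [b] None None r" by (rule gs_bottom) (use lt Cons in auto)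
    also have "\<dots> = gs [] None None y" using Cons by simp
    finally show ?thesis using True Lp_pos[of y] by simp
  qed
next
  case False
  then have i1: "i \<ge> 1" by simp
  have ne: "y \<noteq> []" using i1 il by auto
  show ?thesis
  proof (cases "i \<le> dp y")
    case True
    define q where "q = take i y"
    define z where "z = drop i y"
    have yqz: "y = q @ z" unfolding q_def z_def by simp
    have X: "take i y @ N # drop i y = q @ N # z" unfolding q_def z_def ..
    have Y: "gs [] None None y = gs [] None None (q @ z)" using yqz by simp
    have sq: "sorted_wrt (>) q" unfolding q_def using dec_take_iff[of i y] True by simp
    have lq: "length q = i" unfolding q_def using il by simp
    have qne: "q \<noteq> []" using lq i1 by auto
    have hdq: "hd q = y ! 0" unfolding q_def using i1 ne by (simp add: hd_take hd_conv_nth)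
    have qN: "\<forall>v\<in>set q. v < N" using lt yqz by auto
    have gx: "gs [] None None (q @ N # z) = gs (rev q) None None (N # z)"
      using gs_dec[OF sq, of "[]"] by simp
    have gy: "gs [] None None (q @ z) = gs (rev q) None None z"
      using gs_dec[OF sq, of "[]"] by simp
    have hrq: "hd (rev q) = last q" using qne by (simp add: hd_rev)
    have lastN: "last q < N" using qN qne by simp
    have gx2: "gs (rev q) None None (N # z) = gs (rev q) (Some N) (Some N) z"
      using qne hrq lastN by simp
    show ?thesis
    proof (cases z)
      case Nil
      then have "i = length y" using yqz lq by simp
      then have "dp y = length y" using True dp_le[of y] by simp
      then have "i < Lp y" using \<open>i = length y\<close> unfolding Lp_def tp_def by simp
      then show ?thesis unfolding X Y using Nil gx gx2 gy by simp
    next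
      case (Cons b r)
      have bN: "b < N" using lt yqz Cons by simp
      have rN: "\<forall>v\<in>set r. v < N" using lt yqz Cons by simp
      have bq: "b \<notin> set q" using d yqz Cons by auto
      have ly: "length y \<ge> i + 1" using yqz lq Cons by simp
      show ?thesis
      proof (cases "b < hd (rev q)")
        case True
        have "\<forall>v\<in>set q. b < v" using True hrq dec_all_ge_last[OF sq qne] by fastforce
        then have "sorted_wrt (>) (q @ [b])" using sq by (simp add: sorted_wrt_append)
        moreover have "take (i + 1) y = q @ [b]" using yqz lq Cons by simp
        ultimately have "i + 1 \<le> dp y \<or> dp y = length y" using dec_take_iff[of "i + 1" y] by simp
        then have "i < dp y" using ly by auto
        then have iL: "i < Lp y" unfolding Lp_def by simp
        have chk: "\<not> (\<forall>w\<in>set (rev q). w < N \<longrightarrow> w < b)"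
          using True hrq qne lastN by auto
        have "gs (rev q) (Some N) (Some N) (b # r) = gs (b # rev q) None (Some N) r"
          using chk True by simp
        also have "\<dots> = gs (b # rev q) None None r" by (rule gs_Binf[OF rN])
        also have "\<dots> = gs (rev q) None None (b # r)" using True by simp
        finally show ?thesis unfolding X Y using iL gx gx2 gy Cons by simp
      next
        case False
        have "last q \<noteq> b" using bq qne by auto
        then have lb: "last q < b" using False hrq by simp
        have "\<exists>x\<in>set q. \<not> b < x" using lb last_in_set[OF qne] by (intro bexI[of _ "last q"]) auto
        then have "\<not> sorted_wrt (>) (q @ [b])" by (auto simp: sorted_wrt_append)
        moreover have "take (i + 1) y = q @ [b]" using yqz lq Cons by simp
        ultimately have "\<not> (i + 1 \<le> dp y \<or> dp y = length y)" using dec_take_iff[of "i + 1" y] by simp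
        then have dpi: "dp y = i" "dp y \<noteq> length y" using True by auto
        have yi: "y ! i = b" using yqz lq Cons by (simp add: nth_append)
        have "tp y \<longleftrightarrow> b < y ! 0" unfolding tp_def using dpi yi by simp
        then have iL: "i < Lp y \<longleftrightarrow> b < y ! 0" unfolding Lp_def using dpi by simp
        have y0q: "y ! 0 \<in> set q" using hdq qne by (metis list.set_sel(1))
        have "(\<forall>w\<in>set q. w < b) \<longleftrightarrow> y ! 0 < b"
          using y0q dec_all_le_hd[OF sq qne] hdq by fastforce
        moreover have "y ! 0 \<noteq> b" using y0q bq by auto
        ultimately have chk: "(\<forall>w\<in>set (rev q). w < N \<longrightarrow> w < b) \<longleftrightarrow> \<not> b < y ! 0"
          using qN by auto
        have "gs (rev q) (Some N) (Some N) (b # r) \<longleftrightarrow> b < y ! 0 \<and> gs (rev q) (Some b) (Some b) r"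
          using chk False bN qne by auto
        moreover have "gs (rev q) None None (b # r) = gs (rev q) (Some b) (Some b) r"
          using False qne by simp
        ultimately show ?thesis unfolding X Y using iL gx gx2 gy Cons by auto
      qed
    qed
  next
    case False
    define k where "k = dp y"
    have k1: "k \<ge> 1" using dp_pos[OF ne] k_def by simp
    have ki: "k < i" using False k_def by simp
    have kl: "k < length y" using ki il by simp
    define q where "q = take k y"
    define b where "b = y ! k"
    define s where "s = drop (Suc k) y"
    have yq: "y = q @ b # s" unfolding q_def b_def s_def using kl by (simp add: id_take_nth_drop)
    have lq: "length q = k" unfolding q_def using kl by simp
    have qne: "q \<noteq> []" using lq k1 by auto
    have sq: "sorted_wrt (>) q" unfolding q_def k_def using dec_take_iff[of "dp y" y] by simp
    have "take (Suc k) y = q @ [b]" using yq lq by simp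
    moreover have "\<not> (Suc k \<le> dp y \<or> dp y = length y)" using k_def kl by simp
    ultimately have nsb: "\<not> sorted_wrt (>) (q @ [b])" using dec_take_iff[of "Suc k" y] by simp
    have "\<not> b < last q"
    proof
      assume "b < last q"
      then have "\<forall>v\<in>set q. b < v" using dec_all_ge_last[OF sq qne] by fastforce
      then show False using nsb sq by (simp add: sorted_wrt_append)
    qed
    moreover have "b \<noteq> last q" using d yq qne by auto
    ultimately have lb: "last q < b" by simp
    have bN: "b < N" using lt yq by simp
    have tki: "take i y = q @ b # take (i - Suc k) s"
    proof -
      have "take i y = q @ take (i - k) (b # s)" using yq lq ki by (simp add: take_append)
      moreover have "i - k = Suc (i - Suc k)" using ki by simp
      ultimately show ?thesis by simp
    qed
    define rest where "rest = take (i - Suc k) s @ N # drop i y"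
    have x: "take i y @ N # drop i y = q @ b # rest" unfolding rest_def using tki by simp
    have "gs [] None None (q @ b # rest) = gs (rev q) None None (b # rest)"
      using gs_dec[OF sq, of "[]"] by simp
    also have "\<dots> = gs (rev q) (Some b) (Some b) rest"
      using lb qne by (simp add: hd_rev)
    finally have gx: "gs [] None None (take i y @ N # drop i y) = gs (rev q) (Some b) (Some b) rest"
      using x by simp
    have "\<not> gs (rev q) (Some b) (Some b) rest"
    proof (rule gs_kill)
      show "rev q \<noteq> []" using qne by simp
      show "\<forall>w\<in>set (rev q). w < N" using lt yq by auto
      show "N \<in> set rest" unfolding rest_def by simp
      have "\<forall>v\<in>set s. v < N" using lt yq by auto
      moreover have "\<forall>v\<in>set (drop i y). v < N" using lt by (meson in_set_dropD)
      ultimately show "\<forall>v\<in>set rest. v \<le> N" unfolding rest_def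
        by (auto dest: in_set_takeD intro: less_imp_le)
      show "b < N" by (rule bN)
      show "\<forall>a. Some b = Some a \<longrightarrow> a < N" using bN by simp
    qed
    moreover have "\<not> i < Lp y" using Lp_le[of y] k_def ki by simp
    ultimately show ?thesis using gx by simp
  qed
qed

definition Good :: "nat \<Rightarrow> nat list set" where
  "Good n = {x \<in> permutations_of_set {1..n}. gs [] None None x}"

definition pins :: "nat list \<Rightarrow> nat \<Rightarrow> nat list" where
  "pins y i = take i y @ Suc (length y) # drop i y"

lemma perm_len: "x \<in> permutations_of_set {1..n} \<Longrightarrow> length x = n"
  unfolding permutations_of_set_def using distinct_card by fastforce

lemma Lp_le_len: "Lp y \<le> length y + 1"
  using Lp_le[of y] dp_le[of y] by simp

lemma P1: "y \<in> Good n \<Longrightarrow> i < Lp y \<Longrightarrow> pins y i \<in> Good (Suc n)"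
proof -
  assume y: "y \<in> Good n" and i: "i < Lp y"
  have sy: "set y = {1..n}" and dy: "distinct y" using y by (auto simp: Good_def permutations_of_set_def)
  have ly: "length y = n" using y perm_len by (auto simp: Good_def)
  have il: "i \<le> length y" using i Lp_le_len[of y] by simp
  have lt: "\<forall>v\<in>set y. v < Suc (length y)" using sy ly by auto
  have g: "gs [] None None (pins y i)" unfolding pins_def
    using key_ins[OF dy lt il] y i by (simp add: Good_def)
  have td: "set (take i y) \<union> set (drop i y) = set y" by (metis append_take_drop_id set_append)
  have "set (pins y i) = insert (Suc n) (set y)" unfolding pins_def
    using ly td by auto
  then have "set (pins y i) = {1..Suc n}" using sy by auto
  moreover have "distinct (pins y i)"
  proof -
    have "set (take i y) \<inter> set (drop i y) = {}" using dy by (simp add: set_take_disj_set_drop_if_distinct)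
    moreover have "distinct (take i y)" "distinct (drop i y)" using dy by simp_all
    moreover have "Suc (length y) \<notin> set y" using lt by auto
    ultimately show ?thesis unfolding pins_def using td by auto
  qed
  ultimately show ?thesis using g by (simp add: Good_def permutations_of_set_def)
qed

lemma P2: "x \<in> Good (Suc n) \<Longrightarrow> \<exists>y i. y \<in> Good n \<and> i < Lp y \<and> x = pins y i"
proof -
  assume x: "x \<in> Good (Suc n)"
  have sx: "set x = {1..Suc n}" and dx: "distinct x" using x by (auto simp: Good_def permutations_of_set_def)
  have "Suc n \<in> set x" using sx by simp
  then obtain A B where AB: "x = A @ Suc n # B" by (meson split_list)
  define y where "y = A @ B"
  define i where "i = length A"
  have nA: "Suc n \<notin> set A" "Suc n \<notin> set B" using dx AB by auto
  have dy: "distinct y" using dx AB y_def by auto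
  have sy: "set y = {1..n}"
  proof -
    have "set y = set x - {Suc n}" using AB y_def nA by auto
    also have "\<dots> = {1..n}" using sx by (simp add: atLeastAtMostSuc_conv)
    finally show ?thesis .
  qed
  have "length y = card (set y)" using dy by (simp add: distinct_card)
  then have ly: "length y = n" using sy by simp
  have xe: "x = take i y @ Suc (length y) # drop i y" using AB y_def i_def ly by simp
  have lt: "\<forall>v\<in>set y. v < Suc (length y)" using sy ly by auto
  have il: "i \<le> length y" using y_def i_def by simp
  have "gs [] None None x" using x by (simp add: Good_def)
  then have "gs [] None None (take i y @ Suc (length y) # drop i y)" using xe by (simp only:)
  then have "gs [] None None y \<and> i < Lp y" using key_ins[OF dy lt il] by (simp only:)
  moreover have "y \<in> permutations_of_set {1..n}" using sy dy by (simp add: permutations_of_set_def)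
  ultimately have "y \<in> Good n \<and> i < Lp y \<and> x = pins y i" using xe unfolding pins_def Good_def by simp
  then show ?thesis by blast
qed

lemma takeWhile_split: "N \<notin> set A \<Longrightarrow> takeWhile (\<lambda>u. u \<noteq> N) (A @ N # B) = A"
  by (induction A) auto

lemma P3: "pins y i = pins y' i' \<Longrightarrow> length y = length y' \<Longrightarrow> Suc (length y) \<notin> set y \<Longrightarrow>
   Suc (length y) \<notin> set y' \<Longrightarrow> i \<le> length y \<Longrightarrow> i' \<le> length y' \<Longrightarrow> y = y' \<and> i = i'"
proof -
  assume e: "pins y i = pins y' i'" and l: "length y = length y'" and n1: "Suc (length y) \<notin> set y"
    and n2: "Suc (length y) \<notin> set y'" and i: "i \<le> length y" and i': "i' \<le> length y'"
  define N where "N = Suc (length y)"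
  have a1: "N \<notin> set (take i y)" using n1 N_def by (meson in_set_takeD)
  have a2: "N \<notin> set (take i' y')" using n2 N_def by (meson in_set_takeD)
  have e2: "take i y @ N # drop i y = take i' y' @ N # drop i' y'" using e l unfolding pins_def N_def by simp
  have "take i y = take i' y'"
    using takeWhile_split[OF a1, of "drop i y"] takeWhile_split[OF a2, of "drop i' y'"] e2 by simp
  moreover then have "drop i y = drop i' y'" using e2 by simp
  ultimately have "y = y'" by (metis append_take_drop_id)
  moreover have "i = i'"
  proof -
    have "length (take i y) = i" using i by simp
    moreover have "length (take i' y') = i'" using i' by simp
    ultimately show ?thesis using \<open>take i y = take i' y'\<close> by simp
  qed
  ultimately show ?thesis by simp
qed

lemma dp_eq: "sorted_wrt (>) (take k x) \<Longrightarrow> k < length x \<Longrightarrow> \<not> sorted_wrt (>) (take (Suc k) x) \<Longrightarrow> dp x = k"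
  using dec_take_iff[of k x] dec_take_iff[of "Suc k" x] by auto

lemma P4a: "\<forall>v\<in>set y. v < Suc (length y) \<Longrightarrow>
  Lp (pins y 0) = Lp y + (if tp y then 1 else 2) \<and> tp (pins y 0)"
proof (cases y)
  case Nil then show ?thesis by (simp add: pins_def Lp_def tp_def)
next
  case (Cons b r)
  assume lt: "\<forall>v\<in>set y. v < Suc (length y)"
  define N where "N = Suc (length y)"
  have bN: "b < N" using lt Cons N_def by simp
  have px: "pins y 0 = N # b # r" unfolding pins_def N_def using Cons by simp
  have dpx: "dp (pins y 0) = Suc (dp y)" using px bN Cons by simp
  have tpx: "tp (pins y 0)"
  proof (cases "dp y = length y")
    case True then show ?thesis unfolding tp_def using dpx px Cons by simp
  next
    case False
    then have "dp y < length y" using dp_le[of y] by simp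
    then have "y ! dp y < N" using lt N_def by simp
    then show ?thesis unfolding tp_def using dpx px Cons by simp
  qed
  show ?thesis using dpx tpx unfolding Lp_def by simp
qed

lemma P4b: "distinct y \<Longrightarrow> \<forall>v\<in>set y. v < Suc (length y) \<Longrightarrow> 1 \<le> i \<Longrightarrow> i < Lp y \<Longrightarrow>
  Lp (pins y i) = i \<and> \<not> tp (pins y i)"
proof -
  assume d: "distinct y" and lt: "\<forall>v\<in>set y. v < Suc (length y)" and i1: "1 \<le> i" and iL: "i < Lp y"
  define N where "N = Suc (length y)"
  have il: "i \<le> length y" using iL Lp_le_len[of y] by simp
  have idp: "i \<le> dp y" using iL Lp_le[of y] by simp
  have x: "pins y i = take i y @ N # drop i y" unfolding pins_def N_def by simp
  have tk: "take i (pins y i) = take i y" using x il by simp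
  have tk1: "take (Suc i) (pins y i) = take i y @ [N]" using x il by simp
  have s: "sorted_wrt (>) (take i y)" using dec_take_iff[of i y] idp by simp
  have tne: "take i y \<noteq> []" using i1 il by (cases y) auto
  have "hd (take i y) = y ! 0" using tne by (cases y) (auto simp: hd_take)
  then have y0: "y ! 0 \<in> set (take i y)" using tne by (metis hd_in_set)
  have "y ! 0 < N" using y0 lt N_def by (auto dest: in_set_takeD)
  then have "\<exists>v\<in>set (take i y). \<not> N < v" using y0 by (intro bexI[of _ "y ! 0"]) auto
  then have ns: "\<not> sorted_wrt (>) (take (Suc i) (pins y i))" using tk1 by (auto simp: sorted_wrt_append)
  have dpx: "dp (pins y i) = i" using dp_eq[of i "pins y i"] tk s ns x il by simp
  have "pins y i ! i = N" using x il by (simp add: nth_append)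
  moreover have "pins y i ! 0 = y ! 0" using x il i1 by (simp add: nth_append)
  moreover have "y ! 0 < N" by fact
  moreover have "length (pins y i) = Suc (length y)" unfolding pins_def by simp
  ultimately have "\<not> tp (pins y i)" unfolding tp_def using dpx il by simp
  then show ?thesis unfolding Lp_def using dpx by simp
qed

section \<open>Dyck path side\<close>

abbreviation dudu :: "bool list" where "dudu \<equiv> [False, True, False, True]"

definition au :: "bool list \<Rightarrow> nat" where "au w = length (takeWhile (\<lambda>b. b) w)"
definition bd :: "bool list \<Rightarrow> nat" where "bd w = length (takeWhile Not (drop (au w) w))"
definition rs :: "bool list \<Rightarrow> bool list" where "rs w = drop (au w + bd w) w"

lemma takeWhile_T: "takeWhile (\<lambda>b. b) w = replicate (length (takeWhile (\<lambda>b. b) w)) True"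
  by (induction w) auto

lemma takeWhile_F: "takeWhile Not w = replicate (length (takeWhile Not w)) False"
  by (induction w) auto

lemma form: "w = replicate (au w) True @ replicate (bd w) False @ rs w"
proof -
  have e1: "w = takeWhile (\<lambda>b. b) w @ drop (au w) w"
    unfolding au_def by (metis takeWhile_dropWhile_id dropWhile_eq_drop)
  have e2: "drop (au w) w = takeWhile Not (drop (au w) w) @ drop (bd w) (drop (au w) w)"
    unfolding bd_def by (metis takeWhile_dropWhile_id dropWhile_eq_drop)
  have "drop (bd w) (drop (au w) w) = rs w" unfolding rs_def by (simp add: add.commute)
  then show ?thesis using e1 e2 takeWhile_T[of w] takeWhile_F[of "drop (au w) w"]
    unfolding au_def[symmetric] bd_def[symmetric] by simp
qed

lemma form_rs: "rs w \<noteq> [] \<Longrightarrow> hd (rs w) = True"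
proof -
  assume ne: "rs w \<noteq> []"
  have "rs w = drop (bd w) (drop (au w) w)" unfolding rs_def by (simp add: add.commute)
  also have "\<dots> = dropWhile Not (drop (au w) w)" unfolding bd_def by (simp add: dropWhile_eq_drop)
  finally have "rs w = dropWhile Not (drop (au w) w)" .
  then show ?thesis using ne hd_dropWhile[of Not "drop (au w) w"] by simp
qed

lemma form_bd: "bd w = 0 \<Longrightarrow> rs w = []"
proof -
  assume b: "bd w = 0"
  have d: "drop (au w) w = dropWhile (\<lambda>b. b) w" unfolding au_def by (simp add: dropWhile_eq_drop)
  have "rs w = drop (au w) w" unfolding rs_def using b by simp
  moreover have "drop (au w) w = [] \<or> hd (drop (au w) w) = False"
    using d hd_dropWhile[of "\<lambda>b. b" w] by (cases "dropWhile (\<lambda>b. b) w = []") auto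
  moreover have "drop (au w) w \<noteq> [] \<Longrightarrow> hd (drop (au w) w) = False \<Longrightarrow> bd w \<ge> 1"
    unfolding bd_def by (cases "drop (au w) w") auto
  ultimately show ?thesis using b by auto
qed

lemma form_inv:
  assumes "1 \<le> b \<or> r = []" and "r = [] \<or> hd r = True"
  shows "au (replicate a True @ replicate b False @ r) = a \<and> bd (replicate a True @ replicate b False @ r) = b
     \<and> rs (replicate a True @ replicate b False @ r) = r"
proof -
  let ?v = "replicate b False @ r"
  have tv: "takeWhile (\<lambda>b. b) ?v = []" using assms by (cases b) auto
  have ta: "takeWhile (\<lambda>b. b) (replicate a True @ ?v) = replicate a True @ takeWhile (\<lambda>b. b) ?v"
    by (induction a) auto
  have A: "au (replicate a True @ ?v) = a" unfolding au_def using ta tv by simp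
  have tr: "takeWhile Not r = []" using assms(2) by (cases r) auto
  have tb: "takeWhile Not ?v = replicate b False @ takeWhile Not r" by (induction b) auto
  have B: "bd (replicate a True @ ?v) = b" unfolding bd_def A using tb tr by simp
  have C: "rs (replicate a True @ ?v) = r" unfolding rs_def A B by simp
  show ?thesis using A B C by simp
qed

definition hok :: "int \<Rightarrow> bool list \<Rightarrow> bool" where
  "hok h w \<longleftrightarrow> (\<forall>k\<le>length w. 0 \<le> h + height (take k w))"

lemma height_Nil[simp]: "height [] = 0" by (simp add: height_def)
lemma height_Cons[simp]: "height (x # w) = (if x then 1 else -1) + height w" by (simp add: height_def)
lemma height_append[simp]: "height (u @ v) = height u + height v" by (simp add: height_def)
lemma height_repT[simp]: "height (replicate m True) = int m" by (induction m) auto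
lemma height_repF[simp]: "height (replicate m False) = - int m" by (induction m) auto

lemma hok_Nil[simp]: "hok h [] \<longleftrightarrow> 0 \<le> h" by (simp add: hok_def)

lemma hok_Cons[simp]: "hok h (x # w) \<longleftrightarrow> 0 \<le> h \<and> hok (h + (if x then 1 else -1)) w"
proof
  assume H: "hok h (x # w)"
  have "0 \<le> h" using H[unfolded hok_def, rule_format, of 0] by simp
  moreover have "hok (h + (if x then 1 else -1)) w"
    unfolding hok_def
  proof (intro allI impI)
    fix k assume "k \<le> length w"
    then have "0 \<le> h + height (take (Suc k) (x # w))" using H unfolding hok_def by auto
    then show "0 \<le> h + (if x then 1 else -1) + height (take k w)" by simp
  qed
  ultimately show "0 \<le> h \<and> hok (h + (if x then 1 else -1)) w" by simp
next
  assume H: "0 \<le> h \<and> hok (h + (if x then 1 else -1)) w"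
  show "hok h (x # w)" unfolding hok_def
  proof (intro allI impI)
    fix k assume k: "k \<le> length (x # w)"
    show "0 \<le> h + height (take k (x # w))"
    proof (cases k)
      case 0 then show ?thesis using H by simp
    next
      case (Suc k')
      then have "0 \<le> h + (if x then 1 else -1) + height (take k' w)" using H k unfolding hok_def by simp
      then show ?thesis using Suc by simp
    qed
  qed
qed

lemma hok_0: "hok h v \<Longrightarrow> 0 \<le> h"
proof -
  assume "hok h v"
  then have "0 \<le> h + height (take 0 v)" unfolding hok_def by blast
  then show ?thesis by simp
qed

lemma hok_append: "hok h (u @ v) \<longleftrightarrow> hok h u \<and> hok (h + height u) v"
proof (induction u arbitrary: h)
  case Nil
  then show ?case using hok_0 by auto
next
  case (Cons x u)
  have "hok h ((x # u) @ v) = (0 \<le> h \<and> hok (h + (if x then 1 else -1)) (u @ v))" by simp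
  also have "\<dots> = (0 \<le> h \<and> hok (h + (if x then 1 else -1)) u \<and> hok (h + (if x then 1 else -1) + height u) v)"
    using Cons.IH by simp
  also have "\<dots> = (hok h (x # u) \<and> hok (h + height (x # u)) v)" by (simp add: add.assoc)
  finally show ?case .
qed

lemma hok_repT: "hok h (replicate m True @ v) \<longleftrightarrow> 0 \<le> h \<and> hok (h + int m) v"
proof (induction m arbitrary: h)
  case 0 then show ?case using hok_0 by auto
next
  case (Suc m)
  have "hok h (replicate (Suc m) True @ v) = (0 \<le> h \<and> hok (h + 1) (replicate m True @ v))" by simp
  also have "\<dots> = (0 \<le> h \<and> 0 \<le> h + 1 \<and> hok (h + 1 + int m) v)" using Suc.IH by simp
  also have "\<dots> = (0 \<le> h \<and> hok (h + int (Suc m)) v)" by (auto simp: add.assoc)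
  finally show ?case .
qed

lemma hok_repF: "hok h (replicate m False @ v) \<longleftrightarrow> 0 \<le> h - int m \<and> hok (h - int m) v"
proof (induction m arbitrary: h)
  case 0 then show ?case using hok_0 by auto
next
  case (Suc m)
  have "hok h (replicate (Suc m) False @ v) = (0 \<le> h \<and> hok (h - 1) (replicate m False @ v))" by simp
  also have "\<dots> = (0 \<le> h \<and> 0 \<le> h - 1 - int m \<and> hok (h - 1 - int m) v)" using Suc.IH by simp
  also have "\<dots> = (0 \<le> h - int (Suc m) \<and> hok (h - int (Suc m)) v)" by (auto simp: algebra_simps)
  finally show ?case .
qed

lemma dyck_hok: "dyck_path n w \<longleftrightarrow> length w = 2 * n \<and> height w = 0 \<and> hok 0 w"
  unfolding dyck_path_def hok_def by simp

lemma sub_T: "sublist dudu (True # v) \<longleftrightarrow> sublist dudu v"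
  by (simp add: sublist_Cons_right)

lemma sub_repT: "sublist dudu (replicate m True @ v) \<longleftrightarrow> sublist dudu v"
  by (induction m) (simp_all add: sub_T)

lemma sub_FF: "sublist dudu (False # False # v) \<longleftrightarrow> sublist dudu (False # v)"
  by (simp add: sublist_Cons_right)

lemma sub_repF: "sublist dudu (replicate (Suc m) False @ v) \<longleftrightarrow> sublist dudu (False # v)"
proof (induction m)
  case 0 then show ?case by simp
next
  case (Suc m)
  have "sublist dudu (replicate (Suc (Suc m)) False @ v) = sublist dudu (False # False # (replicate m False @ v))"
    by simp
  also have "\<dots> = sublist dudu (replicate (Suc m) False @ v)" by (simp add: sub_FF)
  finally show ?case using Suc by simp
qed

lemma sub_FT: "sublist dudu (False # True # v) \<longleftrightarrow> prefix [False, True] v \<or> sublist dudu v"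
  by (simp add: sublist_Cons_right)

lemma sub_Nil: "\<not> sublist dudu []" by simp

lemma sub_F_Nil: "\<not> sublist dudu [False]" by (simp add: sublist_Cons_right)

definition Dy :: "nat \<Rightarrow> bool list set" where
  "Dy n = {w. dyck_path n w \<and> \<not> sublist dudu w}"

definition tq :: "bool list \<Rightarrow> bool" where "tq w \<longleftrightarrow> rs w = [] \<or> 2 \<le> bd w"
definition Mq :: "bool list \<Rightarrow> nat" where "Mq w = au w + (if tq w then 1 else 0)"

definition child :: "bool list \<Rightarrow> nat \<Rightarrow> bool list" where
  "child w i = (if i = 0 then True # take (au w) w @ False # drop (au w) w
                else take i w @ False # True # drop i w)"

definition parent :: "bool list \<Rightarrow> bool list \<times> nat" where
  "parent w = (if bd w = 1 \<and> rs w \<noteq> [] then (replicate (au w) True @ tl (rs w), au w)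
               else (replicate (au w - 1) True @ replicate (bd w - 1) False @ rs w, 0))"

lemma form_rs': "rs w = [] \<or> hd (rs w) = True"
  using form_rs by blast

lemma height_form: "height w = int (au w) - int (bd w) + height (rs w)"
  by (subst form) simp

lemma hok_form: "hok 0 w \<longleftrightarrow> 0 \<le> int (au w) - int (bd w) \<and> hok (int (au w) - int (bd w)) (rs w)"
  by (subst form) (simp add: hok_repT hok_repF)

lemma length_form: "length w = au w + bd w + length (rs w)"
  by (subst form) simp

lemma sub_form: "1 \<le> bd w \<Longrightarrow> sublist dudu w \<longleftrightarrow> sublist dudu (False # rs w)"
proof -
  assume b: "1 \<le> bd w"
  obtain b' where b': "bd w = Suc b'" using b by (cases "bd w") auto
  have "sublist dudu w = sublist dudu (replicate (au w) True @ replicate (bd w) False @ rs w)"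
    by (subst form) simp
  also have "\<dots> = sublist dudu (replicate (Suc b') False @ rs w)" using b' by (simp add: sub_repT)
  also have "\<dots> = sublist dudu (False # rs w)" by (rule sub_repF)
  finally show ?thesis .
qed

lemma Dy_bd0: "w \<in> Dy n \<Longrightarrow> bd w = 0 \<Longrightarrow> w = []"
proof -
  assume w: "w \<in> Dy n" and b: "bd w = 0"
  have r: "rs w = []" using form_bd b by simp
  have "height w = 0" using w by (simp add: Dy_def dyck_hok)
  then have "au w = 0" using height_form[of w] b r by simp
  then show ?thesis using form[of w] b r by simp
qed

lemma TF_Dy: "[True, False] \<in> Dy (Suc 0)"
  by (simp add: Dy_def dyck_hok sublist_Cons_right)

lemma Mq_Nil: "Mq [] = 1"
  by (simp add: Mq_def tq_def au_def bd_def rs_def)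

lemma child_Nil: "child [] 0 = [True, False]"
  by (simp add: child_def au_def)

lemma take_repT: "i \<le> a \<Longrightarrow> take i (replicate a True @ X) = replicate i True"
  by simp

lemma drop_repT: "i \<le> a \<Longrightarrow> drop i (replicate a True @ X) = replicate (a - i) True @ X"
  by simp

lemma child0_form: "1 \<le> bd w \<Longrightarrow>
  child w 0 = replicate (Suc (au w)) True @ replicate (Suc (bd w)) False @ rs w"
proof -
  have t: "take (au w) w = replicate (au w) True"
    by (subst form) (simp only: take_repT[OF order_refl])
  have d: "drop (au w) w = replicate (bd w) False @ rs w"
    by (subst form) (simp only: drop_repT[OF order_refl], simp)
  show ?thesis unfolding child_def using t d by simp
qed

lemma childi_form: "1 \<le> i \<Longrightarrow> i \<le> au w \<Longrightarrow>
  child w i = replicate i True @ replicate 1 False @ (True # (replicate (au w - i) True @ replicate (bd w) False @ rs w))"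
proof -
  assume i1: "1 \<le> i" and ia: "i \<le> au w"
  have t: "take i w = replicate i True"
    by (subst form) (simp only: take_repT[OF ia])
  have d: "drop i w = replicate (au w - i) True @ replicate (bd w) False @ rs w"
    by (subst form) (simp only: drop_repT[OF ia])
  show ?thesis unfolding child_def using t d i1 by simp
qed

lemma C1:
  assumes w: "w \<in> Dy n" and i: "i < Mq w"
  shows "child w i \<in> Dy (Suc n)"
proof (cases "bd w = 0")
  case True
  then have "w = []" using Dy_bd0 w by simp
  moreover then have "n = 0" using w by (simp add: Dy_def dyck_hok)
  moreover have "i = 0" using i \<open>w = []\<close> Mq_Nil by simp
  ultimately show ?thesis using TF_Dy child_Nil by simp
next
  case False
  then have b1: "1 \<le> bd w" by simp
  have dw: "length w = 2 * n" "height w = 0" "hok 0 w" "\<not> sublist dudu w"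
    using w by (simp_all add: Dy_def dyck_hok)
  have sw: "\<not> sublist dudu (False # rs w)" using dw(4) sub_form[OF b1] by simp
  have hw: "0 \<le> int (au w) - int (bd w)" "hok (int (au w) - int (bd w)) (rs w)"
    using dw(3) hok_form by simp_all
  have lw: "au w + bd w + length (rs w) = 2 * n" using dw(1) length_form[of w] by simp
  have htw: "int (au w) - int (bd w) + height (rs w) = 0" using dw(2) height_form[of w] by simp
  show ?thesis
  proof (cases "i = 0")
    case True
    let ?c = "replicate (Suc (au w)) True @ replicate (Suc (bd w)) False @ rs w"
    have c: "child w i = ?c" using child0_form[OF b1] True by simp
    have "length ?c = 2 * Suc n" using lw by simp
    moreover have "height ?c = 0" using htw by simp
    moreover have "hok 0 ?c" using hw by (simp add: hok_repT hok_repF)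
    moreover have "\<not> sublist dudu ?c" using sw by (simp add: sub_repT sub_repF del: replicate_Suc)
    ultimately show ?thesis using c by (simp add: Dy_def dyck_hok)
  next
    case False
    then have i1: "1 \<le> i" by simp
    have ia: "i \<le> au w" using i unfolding Mq_def by (auto split: if_splits)
    let ?v = "replicate (au w - i) True @ replicate (bd w) False @ rs w"
    let ?c = "replicate i True @ replicate 1 False @ (True # ?v)"
    have c: "child w i = ?c" using childi_form[OF i1 ia] .
    have "length ?c = 2 * Suc n" using lw ia by simp
    moreover have "height ?c = 0" using htw ia by simp
    moreover have "hok 0 ?c"
    proof -
      have "hok (int i) ?v" using hw ia by (simp add: hok_repT hok_repF)
      then show ?thesis using i1 by (simp add: hok_repT hok_repF)
    qed
    moreover have "\<not> sublist dudu ?c"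
    proof -
      have "sublist dudu ?c = sublist dudu (False # True # ?v)" by (simp add: sub_repT)
      also have "\<dots> = (prefix [False, True] ?v \<or> sublist dudu ?v)" by (rule sub_FT)
      finally have e: "sublist dudu ?c = (prefix [False, True] ?v \<or> sublist dudu ?v)" .
      obtain b' where b': "bd w = Suc b'" using b1 by (cases "bd w") auto
      have "sublist dudu ?v = sublist dudu (replicate (Suc b') False @ rs w)" using b' by (simp add: sub_repT)
      also have "\<dots> = sublist dudu (False # rs w)" by (rule sub_repF)
      finally have n2: "\<not> sublist dudu ?v" using sw by simp
      have n1: "\<not> prefix [False, True] ?v"
      proof (cases "au w - i")
        case (Suc m) then show ?thesis by simp
      next
        case 0
        then have "i = au w" using ia by simp
        then have "tq w" using i unfolding Mq_def by (auto split: if_splits)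
        then have "rs w = [] \<or> 2 \<le> bd w" unfolding tq_def .
        then show ?thesis
        proof
          assume "rs w = []"
          then show ?thesis using 0 b' by (cases b') simp_all
        next
          assume "2 \<le> bd w"
          then obtain c where "bd w = Suc (Suc c)" by (metis add_2_eq_Suc le_Suc_ex)
          then show ?thesis using 0 by simp
        qed
      qed
      show ?thesis using e n1 n2 by simp
    qed
    ultimately show ?thesis using c by (simp add: Dy_def dyck_hok)
  qed
qed

lemma sub_prepend: "sublist dudu r \<Longrightarrow> sublist dudu (p @ r)"
  by (induction p) (auto simp: sublist_Cons_right)

lemma Mq_pos: "w \<in> Dy n \<Longrightarrow> 1 \<le> Mq w"
proof (cases "au w = 0")
  case True
  assume w: "w \<in> Dy n"
  have "hok 0 w" using w by (simp add: Dy_def dyck_hok)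
  then have "bd w = 0" using hok_form[of w] True by simp
  then have "w = []" using Dy_bd0 w by simp
  then show ?thesis using Mq_Nil by simp
next
  case False
  then show ?thesis unfolding Mq_def by simp
qed

lemma PC:
  assumes w: "w \<in> Dy n" and i: "i < Mq w"
  shows "parent (child w i) = (w, i)"
proof (cases "bd w = 0")
  case True
  then have "w = []" using Dy_bd0 w by simp
  moreover have "i = 0" using i \<open>w = []\<close> Mq_Nil by simp
  moreover have "parent [True, False] = ([], 0)"
    using form_inv[of 1 "[]" 1] by (simp add: parent_def)
  ultimately show ?thesis using child_Nil by simp
next
  case False
  then have b1: "1 \<le> bd w" by simp
  show ?thesis
  proof (cases "i = 0")
    case True
    have c: "child w i = replicate (Suc (au w)) True @ replicate (Suc (bd w)) False @ rs w"
      using child0_form[OF b1] True by simp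
    have fi: "au (child w i) = Suc (au w)" "bd (child w i) = Suc (bd w)" "rs (child w i) = rs w"
      using form_inv[of "Suc (bd w)" "rs w" "Suc (au w)"] form_rs'[of w] c by simp_all
    have "parent (child w i) = (replicate (au w) True @ replicate (bd w) False @ rs w, 0)"
      unfolding parent_def using fi b1 by simp
    then show ?thesis using form[of w] True by simp
  next
    case False
    then have i1: "1 \<le> i" by simp
    have ia: "i \<le> au w" using i unfolding Mq_def by (auto split: if_splits)
    let ?v = "replicate (au w - i) True @ replicate (bd w) False @ rs w"
    have c: "child w i = replicate i True @ replicate 1 False @ (True # ?v)" using childi_form[OF i1 ia] .
    have fi: "au (child w i) = i" "bd (child w i) = 1" "rs (child w i) = True # ?v"
      using form_inv[of 1 "True # ?v" i] c by simp_all
    have "parent (child w i) = (replicate i True @ ?v, i)"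
      unfolding parent_def using fi by simp
    moreover have "replicate i True @ ?v = w"
    proof -
      have "replicate i True @ replicate (au w - i) True = replicate (au w) True"
        using ia by (metis replicate_add le_add_diff_inverse)
      then have "replicate i True @ ?v = replicate (au w) True @ replicate (bd w) False @ rs w"
        by (metis append.assoc)
      then show ?thesis using form[of w] by simp
    qed
    ultimately show ?thesis by simp
  qed
qed

lemma LC0:
  assumes w: "w \<in> Dy n"
  shows "Mq (child w 0) = Mq w + (if tq w then 1 else 2) \<and> tq (child w 0)"
proof (cases "bd w = 0")
  case True
  then have "w = []" using Dy_bd0 w by simp
  moreover have "au [True, False] = 1" "bd [True, False] = 1" "rs [True, False] = []"
    using form_inv[of 1 "[]" 1] by simp_all
  moreover have "tq []" by (simp add: tq_def rs_def)
  ultimately show ?thesis using child_Nil Mq_Nil by (simp add: Mq_def tq_def)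
next
  case False
  then have b1: "1 \<le> bd w" by simp
  have c: "child w 0 = replicate (Suc (au w)) True @ replicate (Suc (bd w)) False @ rs w"
    using child0_form[OF b1] by simp
  have fi: "au (child w 0) = Suc (au w)" "bd (child w 0) = Suc (bd w)" "rs (child w 0) = rs w"
    using form_inv[of "Suc (bd w)" "rs w" "Suc (au w)"] form_rs'[of w] c by simp_all
  have "tq (child w 0)" unfolding tq_def using fi b1 by simp
  then show ?thesis unfolding Mq_def using fi by simp
qed

lemma LCi:
  assumes w: "w \<in> Dy n" and i1: "1 \<le> i" and i: "i < Mq w"
  shows "Mq (child w i) = i \<and> \<not> tq (child w i)"
proof -
  have ia: "i \<le> au w" using i unfolding Mq_def by (auto split: if_splits)
  let ?v = "replicate (au w - i) True @ replicate (bd w) False @ rs w"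
  have c: "child w i = replicate i True @ replicate 1 False @ (True # ?v)" using childi_form[OF i1 ia] .
  have fi: "au (child w i) = i" "bd (child w i) = 1" "rs (child w i) = True # ?v"
    using form_inv[of 1 "True # ?v" i] c by simp_all
  have "\<not> tq (child w i)" unfolding tq_def using fi by simp
  then show ?thesis unfolding Mq_def using fi by simp
qed

lemma CP:
  assumes w': "w' \<in> Dy (Suc n)"
  shows "fst (parent w') \<in> Dy n \<and> snd (parent w') < Mq (fst (parent w')) \<and>
         child (fst (parent w')) (snd (parent w')) = w'"
proof -
  define a where "a = au w'"
  define b where "b = bd w'"
  define r where "r = rs w'"
  have fw: "w' = replicate a True @ replicate b False @ r" unfolding a_def b_def r_def by (rule form)
  have hr: "r = [] \<or> hd r = True" unfolding r_def by (rule form_rs')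
  have dw: "length w' = 2 * Suc n" "height w' = 0" "hok 0 w'" "\<not> sublist dudu w'"
    using w' by (simp_all add: Dy_def dyck_hok)
  have b1: "1 \<le> b"
  proof (rule ccontr)
    assume "\<not> 1 \<le> b"
    then have "w' = []" using Dy_bd0 w' b_def by simp
    then show False using dw(1) by simp
  qed
  have hw: "0 \<le> int a - int b" "hok (int a - int b) r" using dw(3) hok_form[of w'] a_def b_def r_def by simp_all
  have a1: "1 \<le> a" using hw(1) b1 by simp
  have lw: "a + b + length r = 2 * Suc n" using dw(1) fw by simp
  have htw: "int a - int b + height r = 0" using dw(2) fw by simp
  show ?thesis
  proof (cases "b = 1 \<and> r \<noteq> []")
    case True
    then obtain r2 where r2: "r = True # r2" using hr by (cases r) auto
    have p: "parent w' = (replicate a True @ r2, a)" unfolding parent_def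
      using True r2 a_def b_def r_def by simp
    define w where "w = replicate a True @ r2"
    have fw': "w' = replicate a True @ False # True # r2" using fw True r2 by simp
    have ch: "child w a = w'" unfolding child_def w_def using a1 fw' by simp
    have lw2: "length w = 2 * n" using lw True r2 w_def by simp
    have hw2: "height w = 0" using htw True r2 w_def by simp
    have ok: "hok 0 w" using hw True r2 w_def a1 by (simp add: hok_repT)
    have sw: "\<not> sublist dudu w"
    proof
      assume "sublist dudu w"
      then have "sublist dudu r2" using w_def by (simp add: sub_repT)
      then have "sublist dudu ((replicate a True @ [False, True]) @ r2)" by (rule sub_prepend)
      then show False using dw(4) fw' by simp
    qed
    have wD: "w \<in> Dy n" using lw2 hw2 ok sw by (simp add: Dy_def dyck_hok)
    have "a < Mq w"
    proof (cases "au r2 = 0")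
      case False
      have "au w = a + au r2" unfolding w_def au_def by (induction a) auto
      then show ?thesis using False unfolding Mq_def by simp
    next
      case True
      have fr: "r2 = replicate (bd r2) False @ rs r2" using form[of r2] True by simp
      show ?thesis
      proof (cases "bd r2 = 0")
        case True
        then have "r2 = []" using form_bd fr by simp
        then have "height w = int a" using w_def by simp
        then show ?thesis using hw2 a1 by simp
      next
        case False
        then have c1: "1 \<le> bd r2" by simp
        have ww: "w = replicate a True @ replicate (bd r2) False @ rs r2" using w_def fr by simp
        have fi: "au w = a" "bd w = bd r2" "rs w = rs r2"
          using form_inv[of "bd r2" "rs r2" a] c1 form_rs'[of r2] ww by simp_all
        have "tq w"
        proof (rule ccontr)
          assume "\<not> tq w"
          then have "rs r2 \<noteq> []" "bd r2 < 2" unfolding tq_def using fi by simp_all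
          then have "bd r2 = 1" using c1 by simp
          obtain r4 where r4: "rs r2 = True # r4" using \<open>rs r2 \<noteq> []\<close> form_rs[of r2] by (cases "rs r2") auto
          have "w' = replicate a True @ False # True # False # True # r4"
            using fw' fr \<open>bd r2 = 1\<close> r4 by simp
          then have "sublist dudu w'" by (simp add: sub_repT)
          then show False using dw(4) by simp
        qed
        then show ?thesis unfolding Mq_def using fi by simp
      qed
    qed
    then show ?thesis using p wD ch w_def by simp
  next
    case False
    have p: "parent w' = (replicate (a - 1) True @ replicate (b - 1) False @ r, 0)" unfolding parent_def
      using False a_def b_def r_def by auto
    define w where "w = replicate (a - 1) True @ replicate (b - 1) False @ r"
    have cond: "1 \<le> b - 1 \<or> r = []" using False b1 by auto
    have fi: "au w = a - 1" "bd w = b - 1" "rs w = r"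
      using form_inv[OF cond hr, of "a - 1"] w_def by simp_all
    have ch: "child w 0 = w'"
    proof -
      have "child w 0 = True # take (a - 1) w @ False # drop (a - 1) w"
        unfolding child_def using fi(1) by simp
      also have "\<dots> = True # replicate (a - 1) True @ False # replicate (b - 1) False @ r"
        unfolding w_def by simp
      also have "\<dots> = replicate a True @ replicate b False @ r"
      proof -
        obtain a0 b0 where "a = Suc a0" "b = Suc b0" using a1 b1 by (metis Suc_le_D One_nat_def)
        then show ?thesis by (simp add: replicate_append_same[symmetric])
      qed
      finally show ?thesis using fw by simp
    qed
    have lw2: "length w = 2 * n" using lw w_def a1 b1 by simp
    have hw2: "height w = 0" using htw w_def a1 b1 by simp
    have ok: "hok 0 w" using hw w_def a1 b1 by (simp add: hok_repT hok_repF)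
    have sw: "\<not> sublist dudu w"
    proof (cases "b = 1")
      case True
      then have "r = []" using False by simp
      then have "w = replicate (a - 1) True @ []" using w_def True by simp
      then show ?thesis by (simp only: sub_repT sub_Nil not_False_eq_True)
    next
      case False
      then have "1 \<le> bd w" using fi b1 by simp
      then have "sublist dudu w = sublist dudu (False # r)" using sub_form fi by simp
      moreover have "sublist dudu w' = sublist dudu (False # r)" using sub_form[of w'] b1 b_def r_def by simp
      ultimately show ?thesis using dw(4) by simp
    qed
    have wD: "w \<in> Dy n" using lw2 hw2 ok sw by (simp add: Dy_def dyck_hok)
    then show ?thesis using p ch Mq_pos[OF wD] w_def by simp
  qed
qed

lemma Good_len: "y \<in> Good n \<Longrightarrow> length y = n"
  unfolding Good_def using perm_len by blast

lemma Good_lt: "y \<in> Good n \<Longrightarrow> \<forall>v\<in>set y. v < Suc n"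
  unfolding Good_def permutations_of_set_def by auto

lemma Good_dist: "y \<in> Good n \<Longrightarrow> distinct y"
  unfolding Good_def permutations_of_set_def by auto

lemma rm_ps:
  assumes y: "y \<in> Good n" and i: "i \<le> length y"
  shows "filter (\<lambda>v. v \<noteq> Suc n) (pins y i) = y \<and> length (takeWhile (\<lambda>v. v \<noteq> Suc n) (pins y i)) = i"
proof -
  have ly: "length y = n" using Good_len[OF y] .
  have nin: "\<forall>v\<in>set y. v \<noteq> Suc n" using Good_lt[OF y] by auto
  have p: "pins y i = take i y @ Suc n # drop i y" unfolding pins_def using ly by simp
  have f1: "filter (\<lambda>v. v \<noteq> Suc n) (take i y) = take i y" using nin by (auto intro: filter_True dest: in_set_takeD)
  have f2: "filter (\<lambda>v. v \<noteq> Suc n) (drop i y) = drop i y" using nin by (auto intro: filter_True dest: in_set_dropD)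
  have "filter (\<lambda>v. v \<noteq> Suc n) (pins y i) = y" unfolding p using f1 f2 by simp
  moreover have "takeWhile (\<lambda>v. v \<noteq> Suc n) (pins y i) = take i y"
    unfolding p using takeWhile_split[of "Suc n" "take i y" "drop i y"] nin by (auto dest: in_set_takeD)
  ultimately show ?thesis using i by simp
qed

lemma Good0: "Good 0 = {[]}"
  unfolding Good_def by auto

lemma Dy0: "Dy 0 = {[]}"
  unfolding Dy_def dyck_path_def height_def by auto

lemma main_bij: "\<exists>f. bij_betw f (Good n) (Dy n) \<and> (\<forall>y\<in>Good n. Mq (f y) = Lp y \<and> tq (f y) = tp y)"
proof (induction n)
  case 0
  have "Mq [] = Lp []" "tq [] = tp []" using Mq_Nil by (simp_all add: Lp_def tp_def tq_def rs_def)
  moreover have "bij_betw (\<lambda>_. []) (Good 0) (Dy 0)" using Good0 Dy0 by (simp add: bij_betw_def)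
  ultimately show ?case using Good0 by (intro exI[of _ "\<lambda>_. []"]) simp
next
  case (Suc n)
  then obtain f where bf: "bij_betw f (Good n) (Dy n)" and lf: "\<forall>y\<in>Good n. Mq (f y) = Lp y \<and> tq (f y) = tp y"
    by (elim exE conjE)
  define g where "g x = child (f (filter (\<lambda>v. v \<noteq> Suc n) x)) (length (takeWhile (\<lambda>v. v \<noteq> Suc n) x))" for x
  have gp: "g (pins y i) = child (f y) i" if "y \<in> Good n" "i < Lp y" for y i
  proof -
    have "i \<le> length y" using that Lp_le_len[of y] by simp
    then show ?thesis unfolding g_def using rm_ps[OF that(1)] by simp
  qed
  have fD: "f y \<in> Dy n" if "y \<in> Good n" for y using bij_betw_apply[OF bf that] .
  have inj: "inj_on g (Good (Suc n))"
  proof (rule inj_onI)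
    fix x x' assume x: "x \<in> Good (Suc n)" and x': "x' \<in> Good (Suc n)" and e: "g x = g x'"
    obtain y i where y: "y \<in> Good n" "i < Lp y" "x = pins y i" using P2[OF x] by blast
    obtain y' i' where y': "y' \<in> Good n" "i' < Lp y'" "x' = pins y' i'" using P2[OF x'] by blast
    have m1: "Mq (f y) = Lp y" using lf y(1) by blast
    have m2: "Mq (f y') = Lp y'" using lf y'(1) by blast
    have g1: "g x = child (f y) i" using gp[OF y(1) y(2)] y(3) by simp
    have g2: "g x' = child (f y') i'" using gp[OF y'(1) y'(2)] y'(3) by simp
    have c: "child (f y) i = child (f y') i'" using e g1 g2 by simp
    have p1: "parent (child (f y) i) = (f y, i)" using PC[OF fD[OF y(1)]] y(2) m1 by simp
    have p2: "parent (child (f y') i') = (f y', i')" using PC[OF fD[OF y'(1)]] y'(2) m2 by simp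
    have "(f y, i) = (f y', i')" using p1 p2 c by metis
    then have "f y = f y'" "i = i'" by simp_all
    then have "y = y'" using inj_onD[OF bij_betw_imp_inj_on[OF bf] _ y(1) y'(1)] by simp
    then show "x = x'" using y y' \<open>i = i'\<close> by simp
  qed
  have img: "g ` Good (Suc n) = Dy (Suc n)"
  proof
    show "g ` Good (Suc n) \<subseteq> Dy (Suc n)"
    proof
      fix w assume "w \<in> g ` Good (Suc n)"
      then obtain x where x: "x \<in> Good (Suc n)" "w = g x" by blast
      obtain y i where y: "y \<in> Good n" "i < Lp y" "x = pins y i" using P2[OF x(1)] by blast
      have "i < Mq (f y)" using lf y by simp
      then have "child (f y) i \<in> Dy (Suc n)" using C1[OF fD[OF y(1)]] by simp
      then show "w \<in> Dy (Suc n)" using x y gp by simp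
    qed
  next
    show "Dy (Suc n) \<subseteq> g ` Good (Suc n)"
    proof
      fix w' assume w': "w' \<in> Dy (Suc n)"
      define w where "w = fst (parent w')"
      define i where "i = snd (parent w')"
      have cp: "w \<in> Dy n" "i < Mq w" "child w i = w'" using CP[OF w'] w_def i_def by simp_all
      have "w \<in> f ` Good n" using bij_betw_imp_surj_on[OF bf] cp(1) by simp
      then obtain y where y: "y \<in> Good n" "f y = w" by blast
      have "Mq (f y) = Lp y" using lf y(1) by blast
      then have iL: "i < Lp y" using cp(2) y(2) by simp
      have mem: "pins y i \<in> Good (Suc n)" using P1[OF y(1) iL] .
      have eq: "w' = g (pins y i)" using gp[OF y(1) iL] y cp by simp
      show "w' \<in> g ` Good (Suc n)" by (rule image_eqI[where f = g, OF eq mem])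
    qed
  qed
  have lab: "\<forall>x\<in>Good (Suc n). Mq (g x) = Lp x \<and> tq (g x) = tp x"
  proof
    fix x assume x: "x \<in> Good (Suc n)"
    obtain y i where y: "y \<in> Good n" "i < Lp y" "x = pins y i" using P2[OF x] by blast
    have gx: "g x = child (f y) i" using gp y by simp
    have lt: "\<forall>v\<in>set y. v < Suc (length y)" using Good_lt[OF y(1)] Good_len[OF y(1)] by simp
    show "Mq (g x) = Lp x \<and> tq (g x) = tp x"
    proof (cases "i = 0")
      case True
      have "Mq (child (f y) 0) = Mq (f y) + (if tq (f y) then 1 else 2) \<and> tq (child (f y) 0)"
        using LC0[OF fD[OF y(1)]] .
      moreover have "Lp (pins y 0) = Lp y + (if tp y then 1 else 2) \<and> tp (pins y 0)"
        using P4a[OF lt] .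
      ultimately show ?thesis using gx y True lf by simp
    next
      case False
      then have i1: "1 \<le> i" by simp
      have "i < Mq (f y)" using lf y by simp
      then have "Mq (child (f y) i) = i \<and> \<not> tq (child (f y) i)" using LCi[OF fD[OF y(1)] i1] by simp
      moreover have "Lp (pins y i) = i \<and> \<not> tp (pins y i)" using P4b[OF Good_dist[OF y(1)] lt i1 y(2)] .
      ultimately show ?thesis using gx y by simp
    qed
  qed
  have "bij_betw g (Good (Suc n)) (Dy (Suc n))" using inj img by (simp add: bij_betw_def)
  then show ?case using lab by (intro exI[of _ g] conjI)
qed

lemma Sort_Good: "Sort_set n [1,3,2] [3,2,1] = Good n"
  unfolding Sort_set_def Good_def
proof (rule Collect_cong)
  fix x
  show "(x \<in> permutations_of_set {1..n} \<and> west_s (s_map {[1, 3, 2], [3, 2, 1]} x) = [1..<n + 1]) =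
        (x \<in> permutations_of_set {1..n} \<and> gs [] None None x)"
    using sort_char[of x n] by blast
qed

theorem theorem1p1:
  fixes n :: nat
  assumes "n \<ge> 1"
  shows "card (Sort_set n [1,3,2] [3,2,1]) = A102407 n"
proof -
  obtain f where "bij_betw f (Good n) (Dy n)" using main_bij by blast
  then have "card (Good n) = card (Dy n)" by (rule bij_betw_same_card)
  then show ?thesis unfolding Sort_Good A102407_def Dy_def by simp
qed

end
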